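(* Consider a robot with configuration $q(t)\in\mathbb{R}^n$ evolving according to $$M(q)\ddot q + C(q,\dot q)\dot q + g(q) = u + f(q,\dot q,w),$$ under the control law $$u = M(q)\ddot q_r + C(q,\dot q)\dot q_r + g(q) - K s - \phi(q,\dot q)\hat a,$$ where $q_d(t)$ is a desired trajectory with bounded derivatives, $\tilde q = q - q_d$, $\dot q_r = \dot q_d - \Lambda \tilde q$, and $s = \dot q - \dot q_r = \dot{\tilde q} + \Lambda\tilde q$; and with the parameter estimate $\hat a$ and matrix $P$ evolving according to the adaptation law $$\dot{\hat a} = -\lambda \hat a - P\phi^\top R^{-1}(\phi\hat a - y) + P\phi^\top s,\qquad \dot P = -2\lambda P + Q - P\phi^\top R^{-1}\phi P,$$ where $y(t) = f(t) + \epsilon(t)$ is a measurement of the unmodeled force with bounded measurement noise $\epsilon(t)$. Let $a(t)$ be a (possibly time-varying) linear weight vector and define the representation error $d(t) = f(q,\dot q,w) - \phi(q,\dot q)a(w)$. Then the position tracking error $\tilde q$ converges exponentially to the ball $$\lim_{t\to\infty}\|\tilde q\| \le \sup_t\big[C_1\|d(t)\| + C_2\|\epsilon(t)\| + C_3(\lambda\|a(t)\| + \|\dot a(t)\|)\big],$$ where $C_1,C_2,C_3$ are bounded constants depending on $\phi, R, Q, K, \Lambda, M$ and $\lambda$.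
   Context: $M(q)$ is the symmetric positive definite inertia matrix, $C(q,\dot q)$ the Coriolis matrix (so that $\dot M - 2C$ is skew-symmetric), $g(q)$ the gravity vector, $u\in\mathbb{R}^n$ the control force, $f(q,\dot q,w)\in\mathbb{R}^n$ the unmodeled dynamics depending on an unknown, possibly time-varying environment condition $w$. $\phi(q,\dot q)\in\mathbb{R}^{n\times h}$ is a given (learned) basis/representation function and $\hat a\in\mathbb{R}^h$ an online estimate of the linear coefficients. The gains $K$, $\Lambda$ are positive definite matrices, $Q$ and $R$ are positive definite gain matrices, $\lambda$ is a damping gain, and $P$ is a covariance-like matrix initialized symmetric positive definite. *)

theory Defs
  imports "HOL-Analysis.Analysis" "HOL-Library.Liminf_Limsup"
begin

definition pos_def :: "real^'n^'n \<Rightarrow> bool" where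
  "pos_def A \<longleftrightarrow> transpose A = A \<and> (\<forall>x. x \<noteq> 0 \<longrightarrow> x \<bullet> (A *v x) > 0)"

definition skew_symmetric :: "real^'n^'n \<Rightarrow> bool" where
  "skew_symmetric A \<longleftrightarrow> transpose A = - A"

end

theory Submission
  imports Defs
begin

lemma inner_mv_transpose:
  fixes A :: "real^'m^'n"
  shows "x \<bullet> (A *v y) = (transpose A *v x) \<bullet> y"
proof -
  have "x \<bullet> (A *v y) = (\<Sum>i\<in>UNIV. \<Sum>j\<in>UNIV. x$i * (A$i$j * y$j))"
    by (simp add: inner_vec_def matrix_vector_mult_def sum_distrib_left)
  also have "\<dots> = (\<Sum>j\<in>UNIV. \<Sum>i\<in>UNIV. x$i * (A$i$j * y$j))" by (rule sum.swap)
  also have "\<dots> = (transpose A *v x) \<bullet> y"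
    by (simp add: inner_vec_def vector_matrix_mult_def sum_distrib_left mult_ac)
  finally show ?thesis .
qed

lemma norm_row_mv: 
  fixes A :: "real^'m^'n"
  shows "\<bar>(A *v x) $ i\<bar> \<le> norm (A $ i) * norm x"
  by (simp add: matrix_mult_dot Cauchy_Schwarz_ineq2)

lemma norm_mv: 
  fixes A :: "real^'m^'n"
  shows "norm (A *v x) \<le> norm A * norm x"
proof -
  have "norm (A *v x) = sqrt (\<Sum>i\<in>UNIV. ((A *v x) $ i)\<^sup>2)"
    by (simp add: norm_vec_def L2_set_def)
  also have "\<dots> \<le> sqrt (\<Sum>i\<in>UNIV. (norm (A $ i))\<^sup>2 * (norm x)\<^sup>2)"
  proof (rule real_sqrt_le_mono, rule sum_mono)
    fix i
    have "\<bar>(A *v x) $ i\<bar> \<le> norm (A $ i) * norm x" by (rule norm_row_mv)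
    hence "\<bar>(A *v x) $ i\<bar>\<^sup>2 \<le> (norm (A $ i) * norm x)\<^sup>2"
      by (rule power_mono) simp
    thus "((A *v x) $ i)\<^sup>2 \<le> (norm (A $ i))\<^sup>2 * (norm x)\<^sup>2" by (simp add: power_mult_distrib)
  qed
  also have "\<dots> = sqrt (\<Sum>i\<in>UNIV. (norm (A $ i))\<^sup>2) * norm x"
    by (simp add: sum_distrib_right[symmetric] real_sqrt_mult)
  also have "\<dots> = norm A * norm x"
    by (simp add: norm_vec_def L2_set_def)
  finally show ?thesis .
qed

lemma norm_transpose:
  fixes A :: "real^'m^'n"
  shows "norm (transpose A) = norm A"
proof -
  have "(norm (transpose A))\<^sup>2 = (\<Sum>j\<in>UNIV. \<Sum>i\<in>UNIV. A$i$j * A$i$j)"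
    unfolding power2_norm_eq_inner by (simp add: inner_vec_def transpose_def)
  also have "\<dots> = (\<Sum>i\<in>UNIV. \<Sum>j\<in>UNIV. A$i$j * A$i$j)" by (rule sum.swap)
  also have "\<dots> = (norm A)\<^sup>2"
    unfolding power2_norm_eq_inner by (simp add: inner_vec_def)
  finally show ?thesis by (simp add: power2_eq_iff_nonneg)
qed

lemma mm_row: 
  fixes A :: "real^'m^'n" and B :: "real^'k^'m"
  shows "(A ** B) $ i = transpose B *v (A $ i)"
  by (simp add: vec_eq_iff matrix_matrix_mult_def matrix_vector_mult_def transpose_def mult.commute)

lemma norm_mm: 
  fixes A :: "real^'m^'n" and B :: "real^'k^'m"
  shows "norm (A ** B) \<le> norm A * norm B"
proof -
  have "norm (A ** B) = sqrt (\<Sum>i\<in>UNIV. (norm ((A ** B) $ i))\<^sup>2)"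
    by (simp add: norm_vec_def L2_set_def)
  also have "\<dots> \<le> sqrt (\<Sum>i\<in>UNIV. (norm (A $ i))\<^sup>2 * (norm B)\<^sup>2)"
  proof (rule real_sqrt_le_mono, rule sum_mono)
    fix i
    have "norm ((A ** B) $ i) \<le> norm (A $ i) * norm B"
      using norm_mv[of "transpose B" "A $ i"] by (simp add: mm_row norm_transpose mult.commute)
    hence "(norm ((A ** B) $ i))\<^sup>2 \<le> (norm (A $ i) * norm B)\<^sup>2"
      by (rule power_mono) simp
    thus "(norm ((A ** B) $ i))\<^sup>2 \<le> (norm (A $ i))\<^sup>2 * (norm B)\<^sup>2" by (simp add: power_mult_distrib)
  qed
  also have "\<dots> = sqrt (\<Sum>i\<in>UNIV. (norm (A $ i))\<^sup>2) * norm B"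
    by (simp add: sum_distrib_right[symmetric] real_sqrt_mult)
  also have "\<dots> = norm A * norm B"
    by (simp add: norm_vec_def L2_set_def)
  finally show ?thesis .
qed

lemma bounded_bilinear_mv: "bounded_bilinear (\<lambda>(A::real^'m^'n) x. A *v x)"
proof
  fix a a' :: "real^'m^'n" and b b' :: "real^'m" and r :: real
  show "(a + a') *v b = a *v b + a' *v b" by (simp add: matrix_vector_mult_add_rdistrib)
  show "a *v (b + b') = a *v b + a *v b'" by (simp add: matrix_vector_right_distrib)
  show "(r *\<^sub>R a) *v b = r *\<^sub>R (a *v b)"
    by (simp add: vec_eq_iff matrix_vector_mult_def sum_distrib_left mult.assoc)
  show "a *v (r *\<^sub>R b) = r *\<^sub>R (a *v b)"
    by (simp add: vec_eq_iff matrix_vector_mult_def sum_distrib_left mult.left_commute)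
  show "\<exists>K. \<forall>a b. norm (a *v b) \<le> norm (a::real^'m^'n) * norm (b::real^'m) * K"
    by (rule exI[of _ 1]) (simp add: norm_mv)
qed

lemma bounded_bilinear_mm: "bounded_bilinear (\<lambda>(A::real^'m^'n) (B::real^'k^'m). A ** B)"
proof
  fix a a' :: "real^'m^'n" and b b' :: "real^'k^'m" and r :: real
  show "(a + a') ** b = a ** b + a' ** b" by (simp add: vec_eq_iff matrix_matrix_mult_def sum.distrib distrib_right)
  show "a ** (b + b') = a ** b + a ** b'" by (simp add: matrix_add_ldistrib)
  show "(r *\<^sub>R a) ** b = r *\<^sub>R (a ** b)"
    by (simp add: vec_eq_iff matrix_matrix_mult_def sum_distrib_left mult.assoc)
  show "a ** (r *\<^sub>R b) = r *\<^sub>R (a ** b)"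
    by (simp add: vec_eq_iff matrix_matrix_mult_def sum_distrib_left mult.left_commute)
  show "\<exists>K. \<forall>a b. norm (a ** b) \<le> norm (a::real^'m^'n) * norm (b::real^'k^'m) * K"
    by (rule exI[of _ 1]) (simp add: norm_mm)
qed

lemma bounded_linear_transpose: "bounded_linear (transpose :: real^'m^'n \<Rightarrow> real^'n^'m)"
proof
  fix a b :: "real^'m^'n" and r :: real
  show "transpose (a + b) = transpose a + transpose b"
    by (simp add: vec_eq_iff transpose_def)
  show "transpose (r *\<^sub>R a) = r *\<^sub>R transpose a" by (rule transpose_scalar)
  show "\<exists>K. \<forall>x::real^'m^'n. norm (transpose x) \<le> norm x * K"
    by (rule exI[of _ 1]) (simp add: norm_transpose)
qed

lemma sym_inner:
  fixes A :: "real^'n^'n"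
  assumes "transpose A = A"
  shows "x \<bullet> (A *v y) = y \<bullet> (A *v x)"
  using inner_mv_transpose[of x A y] assms by (simp add: inner_commute)

lemma quad_abs_le:
  fixes A :: "real^'n^'n"
  shows "\<bar>x \<bullet> (A *v x)\<bar> \<le> norm A * (norm x)\<^sup>2"
proof -
  have "\<bar>x \<bullet> (A *v x)\<bar> \<le> norm x * norm (A *v x)" by (rule Cauchy_Schwarz_ineq2)
  also have "\<dots> \<le> norm x * (norm A * norm x)" by (rule mult_left_mono[OF norm_mv]) simp
  finally show ?thesis by (simp add: power2_eq_square mult_ac)
qed

lemma pd_lower:
  fixes A :: "real^'n^'n"
  assumes "pos_def A"
  shows "\<exists>c>0. \<forall>x. c * (norm x)\<^sup>2 \<le> x \<bullet> (A *v x)"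
proof -
  have cont: "continuous_on (sphere 0 1) (\<lambda>x::real^'n. x \<bullet> (A *v x))"
    by (intro continuous_intros)
  obtain i :: 'n where True by auto
  have ne: "sphere (0::real^'n) 1 \<noteq> {}"
    using norm_axis_1[of i] by (metis mem_sphere_0 empty_iff)
  obtain x0 where x0: "x0 \<in> sphere 0 1" and m: "\<forall>y\<in>sphere 0 1. x0 \<bullet> (A *v x0) \<le> y \<bullet> (A *v y)"
    using continuous_attains_inf[OF compact_sphere ne cont] by blast
  have x0nz: "x0 \<noteq> 0" using x0 by auto
  let ?c = "x0 \<bullet> (A *v x0)"
  have cpos: "?c > 0" using assms x0nz unfolding pos_def_def by blast
  have "?c * (norm x)\<^sup>2 \<le> x \<bullet> (A *v x)" for x
  proof (cases "x = 0")
    case True thus ?thesis by simp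
  next
    case False
    let ?u = "(1 / norm x) *\<^sub>R x"
    have "?u \<in> sphere 0 1" using False by simp
    hence "?c \<le> ?u \<bullet> (A *v ?u)" using m by blast
    also have "\<dots> = (x \<bullet> (A *v x)) / (norm x)\<^sup>2"
      by (simp add: matrix_vector_mult_def power2_eq_square scaleR_vec_def inner_vec_def sum_distrib_left vec_eq_iff mult_ac
           flip: sum_divide_distrib) 
    finally show ?thesis using False by (simp add: field_simps)
  qed
  thus ?thesis using cpos by blast
qed

lemma psd_zero:
  fixes A :: "real^'n^'n"
  assumes sym: "transpose A = A" and psd: "\<forall>y. y \<bullet> (A *v y) \<ge> 0" and z: "x \<bullet> (A *v x) = 0"
  shows "A *v x = 0"
proof (rule ccontr)
  assume nz: "A *v x \<noteq> 0"
  let ?y = "A *v x"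
  define b where "b = ?y \<bullet> ?y"
  define c where "c = ?y \<bullet> (A *v ?y)"
  have bpos: "b > 0" using nz by (simp add: b_def)
  have c0: "c \<ge> 0" using psd by (simp add: c_def)
  define t where "t = - b / (c + 1)"
  have "(x + t *\<^sub>R ?y) \<bullet> (A *v (x + t *\<^sub>R ?y)) = x \<bullet> (A *v x) + 2 * t * b + t * t * c"
  proof -
    have e: "?y \<bullet> (A *v x) = x \<bullet> (A *v ?y)" using sym_inner[OF sym] by metis
    have "A *v (x + t *\<^sub>R ?y) = A *v x + t *\<^sub>R (A *v ?y)"
      by (simp add: matrix_vector_right_distrib bounded_bilinear.scaleR_right[OF bounded_bilinear_mv])
    thus ?thesis using e unfolding b_def c_def
      by (simp add: inner_add_left inner_add_right algebra_simps inner_commute[of x])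
  qed
  also have "\<dots> = 2 * t * b + t * t * c" using z by simp
  also have "\<dots> < 0"
  proof -
    have tneg: "t < 0" unfolding t_def using bpos c0 by (simp add: divide_pos_pos)
    have q: "c / (c + 1) \<le> 1" using c0 by simp
    have "t * c = - b * (c / (c + 1))" unfolding t_def by simp
    also have "\<dots> \<ge> - b" using mult_left_mono[OF q, of b] bpos by simp
    finally have tc: "t * c \<ge> - b" .
    have "2 * t * b + t * t * c = t * (2 * b + t * c)" by (simp add: algebra_simps)
    also have "\<dots> < 0" using tneg tc bpos by (intro mult_neg_pos) auto
    finally show ?thesis .
  qed
  finally show False using psd by (metis not_less)
qed

lemma pd_inv:
  fixes A :: "real^'n^'n"
  assumes "pos_def A"
  shows "A ** matrix_inv A = mat 1" "matrix_inv A ** A = mat 1"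
proof -
  have "inj ((*v) A)"
  proof (rule linear_injective_0[THEN iffD2])
    show "linear ((*v) A)" by simp
    show "\<forall>x. A *v x = 0 \<longrightarrow> x = 0"
      using assms unfolding pos_def_def by (metis inner_zero_right less_irrefl)
  qed
  hence "invertible A" using matrix_left_invertible_injective invertible_left_inverse by blast
  hence "\<exists>A'. A ** A' = mat 1 \<and> A' ** A = mat 1" unfolding invertible_def .
  hence "A ** matrix_inv A = mat 1 \<and> matrix_inv A ** A = mat 1"
    unfolding matrix_inv_def by (rule someI_ex)
  thus "A ** matrix_inv A = mat 1" "matrix_inv A ** A = mat 1" by auto
qed

lemma nonincr_deriv:
  fixes u u' :: "real \<Rightarrow> real"
  assumes ab: "a \<le> b"
    and der: "\<And>t. a \<le> t \<Longrightarrow> t \<le> b \<Longrightarrow> (u has_real_derivative u' t) (at t within {a..b})"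
    and neg: "\<And>t. a < t \<Longrightarrow> t < b \<Longrightarrow> u' t \<le> 0"
  shows "u b \<le> u a"
proof (cases "a = b")
  case True thus ?thesis by simp
next
  case False
  hence "a < b" using ab by simp
  from mvt_simple[OF this, of u "\<lambda>t h. u' t * h"] der
  obtain x where "x \<in> {a<..<b}" "u b - u a = u' x * (b - a)"
    unfolding has_field_derivative_def by blast
  moreover have "(b - a) * u' x \<le> 0" using neg \<open>x \<in> {a<..<b}\<close> ab
    by (intro mult_nonneg_nonpos) auto
  ultimately show ?thesis by (auto simp: mult.commute)
qed

lemma gronwall0:
  fixes z z' :: "real \<Rightarrow> real"
  assumes der: "\<And>t. a \<le> t \<Longrightarrow> (z has_real_derivative z' t) (at t within {a..})"
    and z0: "z a \<le> 0"
    and L: "\<And>T. \<exists>L. \<forall>t. a \<le> t \<and> t \<le> T \<and> z t > 0 \<longrightarrow> z' t \<le> L * z t"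
    and t: "a \<le> t"
  shows "z t \<le> 0"
proof (rule ccontr)
  assume "\<not> z t \<le> 0"
  hence zt: "z t > 0" by simp
  obtain L where L: "\<forall>s. a \<le> s \<and> s \<le> t \<and> z s > 0 \<longrightarrow> z' s \<le> L * z s" using L by blast
  have derab: "(z has_real_derivative z' s) (at s within {a..t})" if "a \<le> s" "s \<le> t" for s
    by (rule DERIV_subset[OF der]) (use that in auto)
  have cont: "continuous_on {a..t} z"
    using derab by (meson DERIV_continuous atLeastAtMost_iff continuous_on_eq_continuous_within)
  define S where "S = {a..t} \<inter> z -` {..0}"
  have cS: "closed S" unfolding S_def by (rule continuous_closed_preimage[OF cont]) auto
  have aS: "a \<in> S" using z0 t by (simp add: S_def)
  have bS: "bdd_above S" unfolding S_def by (rule bdd_aboveI[of _ t]) auto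
  define t0 where "t0 = Sup S"
  have t0S: "t0 \<in> S" unfolding t0_def using closed_contains_Sup[OF _ bS cS] aS by blast
  have t0le: "a \<le> t0" "t0 \<le> t" "z t0 \<le> 0" using t0S by (auto simp: S_def)
  have t0t: "t0 < t" using t0le zt by (metis order.order_iff_strict not_less)
  have pos: "z s > 0" if "t0 < s" "s \<le> t" for s
  proof (rule ccontr)
    assume "\<not> z s > 0"
    hence "s \<in> S" using that t0le by (auto simp: S_def)
    hence "s \<le> t0" unfolding t0_def using bS by (rule cSup_upper)
    thus False using that by simp
  qed
  define u where "u = (\<lambda>s. exp (- L * s) * z s)"
  have uder: "(u has_real_derivative exp (- L * s) * (z' s - L * z s)) (at s within {t0..t})"
    if "t0 \<le> s" "s \<le> t" for s
  proof -
    have "(z has_real_derivative z' s) (at s within {t0..t})"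
        by (rule DERIV_subset[OF derab]) (use that t0le in auto)
    thus ?thesis unfolding u_def
      by (auto intro!: derivative_eq_intros simp: algebra_simps)
  qed
  have "u t \<le> u t0"
  proof (rule nonincr_deriv[OF t0le(2) uder])
    fix s assume "t0 < s" "s < t"
    thus "exp (- L * s) * (z' s - L * z s) \<le> 0"
      using L pos[of s] t0le by (intro mult_nonneg_nonpos) auto
  qed auto
  moreover have "u t > 0" unfolding u_def using zt by simp
  moreover have "u t0 \<le> 0" unfolding u_def using t0le by (simp add: mult_nonneg_nonpos)
  ultimately show False by simp
qed

lemma cmp_lin:
  fixes y y' B B' :: "real \<Rightarrow> real"
  assumes dy: "\<And>t. a \<le> t \<Longrightarrow> (y has_real_derivative y' t) (at t within {a..})"
    and dB: "\<And>t. a \<le> t \<Longrightarrow> (B has_real_derivative B' t) (at t within {a..})"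
    and ineq: "\<And>t. a \<le> t \<Longrightarrow> y t > B t \<Longrightarrow> y' t - B' t \<le> L * (y t - B t)"
    and init: "y a \<le> B a"
    and t: "a \<le> t"
  shows "y t \<le> B t"
proof -
  have d1: "((\<lambda>s. y s - B s) has_real_derivative y' s - B' s) (at s within {a..})" if "a \<le> s" for s
    using dy[OF that] dB[OF that] by (auto intro!: derivative_eq_intros)
  have L1: "\<exists>L. \<forall>s. a \<le> s \<and> s \<le> T \<and> y s - B s > 0 \<longrightarrow> y' s - B' s \<le> L * (y s - B s)" for T
    using ineq by (intro exI[of _ L]) auto
  have "y t - B t \<le> 0"
    using gronwall0[where z = "\<lambda>s. y s - B s" and z' = "\<lambda>s. y' s - B' s", OF d1 _ L1 t] init by simp
  thus ?thesis by simp
qed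

lemma tr_add: "transpose (X + Y) = transpose X + transpose (Y::real^'m^'n)"
  by (simp add: vec_eq_iff transpose_def)
lemma tr_diff: "transpose (X - Y) = transpose X - transpose (Y::real^'m^'n)"
  by (simp add: vec_eq_iff transpose_def)

lemma mv_vd:
  fixes A :: "real \<Rightarrow> real^'m^'n"
  assumes "(A has_vector_derivative A') (at t within S)" "(v has_vector_derivative v') (at t within S)"
  shows "((\<lambda>s. A s *v v s) has_vector_derivative (A t *v v' + A' *v v t)) (at t within S)"
  using bounded_bilinear.has_vector_derivative[OF bounded_bilinear_mv assms] by simp

lemma mm_vd:
  fixes A :: "real \<Rightarrow> real^'m^'n" and B :: "real \<Rightarrow> real^'k^'m"
  assumes "(A has_vector_derivative A') (at t within S)" "(B has_vector_derivative B') (at t within S)"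
  shows "((\<lambda>s. A s ** B s) has_vector_derivative (A t ** B' + A' ** B t)) (at t within S)"
  using bounded_bilinear.has_vector_derivative[OF bounded_bilinear_mm assms] by simp

lemma inner_vd:
  fixes u w :: "real \<Rightarrow> 'a::real_inner"
  assumes "(u has_vector_derivative u') (at t within S)" "(w has_vector_derivative w') (at t within S)"
  shows "((\<lambda>s. u s \<bullet> w s) has_real_derivative (u t \<bullet> w' + u' \<bullet> w t)) (at t within S)"
  using bounded_bilinear.has_vector_derivative[OF bounded_bilinear_inner assms]
  by (simp add: has_real_derivative_iff_has_vector_derivative)

lemma tr_vd:
  fixes A :: "real \<Rightarrow> real^'m^'n"
  assumes "(A has_vector_derivative A') F"
  shows "((\<lambda>s. transpose (A s)) has_vector_derivative transpose A') F"
  using bounded_linear.has_vector_derivative[OF bounded_linear_transpose assms] .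

lemma quad_vd:
  fixes P :: "real \<Rightarrow> real^'n^'n"
  assumes "(P has_vector_derivative P') (at t within S)"
  shows "((\<lambda>s. x \<bullet> (P s *v x)) has_real_derivative (x \<bullet> (P' *v x))) (at t within S)"
proof -
  have "((\<lambda>s. P s *v x) has_vector_derivative (P t *v 0 + P' *v x)) (at t within S)"
    by (rule mv_vd[OF assms]) simp
  hence "((\<lambda>s. x \<bullet> (P s *v x)) has_real_derivative (x \<bullet> (P t *v 0 + P' *v x) + 0 \<bullet> (P t *v x))) (at t within S)"
    by (intro inner_vd) simp_all
  thus ?thesis by simp
qed

lemma compact_bound:
  fixes f :: "real \<Rightarrow> 'a::real_normed_vector"
  assumes "continuous_on {a..b} f"
  shows "\<exists>B. \<forall>t\<in>{a..b}. norm (f t) \<le> B"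
proof -
  have "bounded (f ` {a..b})"
    by (rule compact_imp_bounded[OF compact_continuous_image[OF assms compact_Icc]])
  thus ?thesis unfolding bounded_iff by auto
qed

lemma vd_cont_on:
  assumes "\<And>t. t \<ge> 0 \<Longrightarrow> (f has_vector_derivative f' t) (at t within {0..})"
  shows "continuous_on {0..} f"
  using assms has_vector_derivative_continuous continuous_on_eq_continuous_within
  by (metis atLeast_iff)

lemma vd_cont_on_sub:
  assumes "\<And>t. t \<ge> 0 \<Longrightarrow> (f has_vector_derivative f' t) (at t within {0..})" "a \<ge> 0"
  shows "continuous_on {a..b} f"
  using continuous_on_subset[OF vd_cont_on[OF assms(1)]] assms(2) by auto

lemma ric_sym:
  fixes P P1 A :: "real \<Rightarrow> real^'h^'h" and Q :: "real^'h^'h"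
  assumes dP: "\<And>t. t \<ge> 0 \<Longrightarrow> (P has_vector_derivative P1 t) (at t within {0..})"
    and eq: "\<And>t. t \<ge> 0 \<Longrightarrow> P1 t = (- 2 * lam) *\<^sub>R P t + Q - P t ** A t ** P t"
    and Asym: "\<And>t. transpose (A t) = A t"
    and Abd: "\<And>t. norm (A t) \<le> a0"
    and Qsym: "transpose Q = Q" and P0: "transpose (P 0) = P 0"
    and t: "t \<ge> 0"
  shows "transpose (P t) = P t"
proof -
  define E where "E = (\<lambda>s. P s - transpose (P s))"
  define E' where "E' = (\<lambda>s. P1 s - transpose (P1 s))"
  have dE: "(E has_vector_derivative E' s) (at s within {0..})" if "s \<ge> 0" for s
    unfolding E_def E'_def by (intro has_vector_derivative_diff dP tr_vd that)
  have dz: "((\<lambda>s. E s \<bullet> E s) has_real_derivative (2 * (E s \<bullet> E' s))) (at s within {0..})" if "s \<ge> 0" for s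
    using inner_vd[OF dE[OF that] dE[OF that]] by (simp add: inner_commute)
  have E'eq: "E' s = (- 2 * lam) *\<^sub>R E s - (P s ** A s ** E s + E s ** A s ** transpose (P s))" if "s \<ge> 0" for s
  proof -
    have tr: "transpose (P s ** A s ** P s) = transpose (P s) ** A s ** transpose (P s)"
      by (simp add: matrix_transpose_mul Asym matrix_mul_assoc)
    have "transpose (P1 s) = (- 2 * lam) *\<^sub>R transpose (P s) + Q - transpose (P s) ** A s ** transpose (P s)"
      unfolding eq[OF that] using tr Qsym
      by (simp add: transpose_scalar tr_add tr_diff)
    thus ?thesis unfolding E'_def E_def eq[OF that]
      by (simp add: 
          bounded_bilinear.diff_left[OF bounded_bilinear_mm] bounded_bilinear.diff_right[OF bounded_bilinear_mm]
          algebra_simps scaleR_diff_right)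
  qed
  have L: "\<exists>L. \<forall>s. 0 \<le> s \<and> s \<le> T \<and> E s \<bullet> E s > 0 \<longrightarrow> 2 * (E s \<bullet> E' s) \<le> L * (E s \<bullet> E s)" for T
  proof -
    obtain B where B: "\<forall>s\<in>{0..T}. norm (P s) \<le> B"
      using compact_bound[OF vd_cont_on_sub[OF dP, of 0 T]] by auto
    have "2 * (E s \<bullet> E' s) \<le> (4 * \<bar>lam\<bar> + 4 * (B * a0)) * (E s \<bullet> E s)" if "0 \<le> s" "s \<le> T" for s
    proof -
      have Bs: "norm (P s) \<le> B" using B that by auto
      have B0: "0 \<le> B" using Bs norm_ge_zero order_trans by blast
      have nn: "norm (transpose (P s)) \<le> B" using Bs by (simp add: norm_transpose)
      have a0: "0 \<le> a0" using Abd[of s] norm_ge_zero order_trans by blast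
      have n1: "norm (P s ** A s ** E s) \<le> B * a0 * norm (E s)"
      proof -
        have "norm (P s ** A s ** E s) \<le> norm (P s) * norm (A s) * norm (E s)"
          by (meson norm_mm mult_right_mono norm_ge_zero order_trans)
        also have "\<dots> \<le> B * a0 * norm (E s)"
          using Bs Abd[of s] B0 by (intro mult_right_mono mult_mono) auto
        finally show ?thesis .
      qed
      have n2: "norm (E s ** A s ** transpose (P s)) \<le> B * a0 * norm (E s)"
      proof -
        have "norm (E s ** A s ** transpose (P s)) \<le> norm (E s) * norm (A s) * norm (transpose (P s))"
          by (meson norm_mm mult_right_mono norm_ge_zero order_trans)
        also have "\<dots> \<le> norm (E s) * (a0 * B)"
          using nn Abd[of s] by (simp add: mult.assoc mult_left_mono mult_mono a0)
        finally show ?thesis by (simp add: mult_ac)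
      qed
      have e1: "\<bar>E s \<bullet> (P s ** A s ** E s)\<bar> \<le> B * a0 * (norm (E s))\<^sup>2"
        using Cauchy_Schwarz_ineq2[of "E s" "P s ** A s ** E s"] mult_left_mono[OF n1 norm_ge_zero[of "E s"]]
        by (simp add: power2_eq_square mult_ac)
      have e2: "\<bar>E s \<bullet> (E s ** A s ** transpose (P s))\<bar> \<le> B * a0 * (norm (E s))\<^sup>2"
        using Cauchy_Schwarz_ineq2[of "E s" "E s ** A s ** transpose (P s)"] mult_left_mono[OF n2 norm_ge_zero[of "E s"]]
        by (simp add: power2_eq_square mult_ac)
      have "2 * (E s \<bullet> E' s) = - 4 * lam * (E s \<bullet> E s) - 2 * (E s \<bullet> (P s ** A s ** E s)) - 2 * (E s \<bullet> (E s ** A s ** transpose (P s)))"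
        unfolding E'eq[OF that(1)] by (simp add: inner_diff_right inner_add_right algebra_simps)
      also have "\<dots> \<le> 4 * \<bar>lam\<bar> * (E s \<bullet> E s) + 2 * (B * a0 * (norm (E s))\<^sup>2) + 2 * (B * a0 * (norm (E s))\<^sup>2)"
      proof -
        have "- lam * (E s \<bullet> E s) \<le> \<bar>lam\<bar> * (E s \<bullet> E s)"
          by (intro mult_right_mono) auto
        thus ?thesis using e1 e2 by (auto simp: abs_le_iff)
      qed
      finally show ?thesis by (simp add: power2_norm_eq_inner algebra_simps)
    qed
    thus ?thesis by blast
  qed
  have "E t \<bullet> E t \<le> 0"
    using gronwall0[where z = "\<lambda>s. E s \<bullet> E s", OF dz _ L t] P0 by (simp add: E_def)
  hence "E t = 0" by (metis inner_eq_zero_iff inner_ge_zero order_antisym)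
  thus ?thesis by (simp add: E_def)
qed

lemma quad_PAP:
  fixes P A :: "real^'n^'n"
  assumes "transpose P = P"
  shows "x \<bullet> ((P ** A ** P) *v x) = (P *v x) \<bullet> (A *v (P *v x))"
proof -
  have "(P ** A ** P) *v x = P *v (A *v (P *v x))" by (simp add: matrix_vector_mul_assoc matrix_mul_assoc)
  thus ?thesis using inner_mv_transpose[of x P "A *v (P *v x)"] assms by simp
qed

lemma ric_quad_deriv:
  fixes P P1 A :: "real \<Rightarrow> real^'h^'h" and Q :: "real^'h^'h"
  assumes dP: "\<And>t. t \<ge> 0 \<Longrightarrow> (P has_vector_derivative P1 t) (at t within {0..})"
    and eq: "\<And>t. t \<ge> 0 \<Longrightarrow> P1 t = (- 2 * lam) *\<^sub>R P t + Q - P t ** A t ** P t"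
    and sym: "transpose (P t) = P t" and t: "t \<ge> 0"
  shows "((\<lambda>s. x \<bullet> (P s *v x)) has_real_derivative
          (- 2 * lam) * (x \<bullet> (P t *v x)) + x \<bullet> (Q *v x) - (P t *v x) \<bullet> (A t *v (P t *v x))) (at t within {0..})"
proof -
  have "x \<bullet> (P1 t *v x) = (- 2 * lam) * (x \<bullet> (P t *v x)) + x \<bullet> (Q *v x) - (P t *v x) \<bullet> (A t *v (P t *v x))"
    unfolding eq[OF t] quad_PAP[OF sym, symmetric]
    by (simp add: matrix_vector_mult_add_rdistrib bounded_bilinear.diff_left[OF bounded_bilinear_mv]
        bounded_bilinear.scaleR_left[OF bounded_bilinear_mv] inner_diff_right inner_add_right)
  thus ?thesis using quad_vd[OF dP[OF t], of x] by simp
qed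

lemma ric_pd:
  fixes P P1 A :: "real \<Rightarrow> real^'h^'h" and Q :: "real^'h^'h"
  assumes dP: "\<And>t. t \<ge> 0 \<Longrightarrow> (P has_vector_derivative P1 t) (at t within {0..})"
    and eq: "\<And>t. t \<ge> 0 \<Longrightarrow> P1 t = (- 2 * lam) *\<^sub>R P t + Q - P t ** A t ** P t"
    and Asym: "\<And>t. transpose (A t) = A t"
    and Apsd: "\<And>t x. x \<bullet> (A t *v x) \<ge> 0"
    and Abd: "\<And>t. norm (A t) \<le> a0"
    and Qpd: "pos_def Q" and P0: "pos_def (P 0)"
    and t: "t \<ge> 0"
  shows "pos_def (P t)"
proof (rule ccontr)
  assume nt: "\<not> pos_def (P t)"
  have Qsym: "transpose Q = Q" using Qpd by (simp add: pos_def_def)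
  have sym: "transpose (P s) = P s" if "s \<ge> 0" for s
  proof -
    have P0sym: "transpose (P 0) = P 0" using P0 by (simp add: pos_def_def)
    show ?thesis using ric_sym[OF dP eq Asym Abd Qsym P0sym that] .
  qed
  define S where "S = {s. 0 \<le> s \<and> \<not> pos_def (P s)}"
  have tS: "t \<in> S" using nt t by (simp add: S_def)
  have bS: "bdd_below S" unfolding S_def by (rule bdd_belowI[of _ 0]) auto
  define t0 where "t0 = Inf S"
  have t00: "0 \<le> t0" unfolding t0_def using tS by (intro cInf_greatest) (auto simp: S_def)
  have before: "pos_def (P s)" if "0 \<le> s" "s < t0" for s
  proof (rule ccontr)
    assume "\<not> pos_def (P s)"
    hence "s \<in> S" using that by (simp add: S_def)
    hence "t0 \<le> s" unfolding t0_def using bS by (rule cInf_lower)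
    thus False using that by simp
  qed
  have contP: "continuous (at t0 within {0..}) P"
    using dP[OF t00] by (rule has_vector_derivative_continuous)
  show False
  proof (cases "pos_def (P t0)")
    case True
    obtain c where c: "c > 0" "\<forall>x. c * (norm x)\<^sup>2 \<le> x \<bullet> (P t0 *v x)" using pd_lower[OF True] by blast
    obtain d where d: "d > 0" "\<forall>s\<in>{0..}. dist s t0 < d \<longrightarrow> dist (P s) (P t0) < c"
      using contP c(1) unfolding continuous_within_eps_delta by metis
    have near: "pos_def (P s)" if "0 \<le> s" "dist s t0 < d" for s
      unfolding pos_def_def
    proof (intro conjI allI impI)
      show "transpose (P s) = P s" using sym that by simp
      fix x :: "real^'h" assume "x \<noteq> 0"
      have nd: "norm (P s - P t0) < c" using d that by (simp add: dist_norm)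
      have e: "x \<bullet> (P s *v x) = x \<bullet> (P t0 *v x) + x \<bullet> ((P s - P t0) *v x)"
        by (simp add: bounded_bilinear.diff_left[OF bounded_bilinear_mv] inner_diff_right)
      have q1: "c * (norm x)\<^sup>2 \<le> x \<bullet> (P t0 *v x)" using c(2) by blast
      have q2: "\<bar>x \<bullet> ((P s - P t0) *v x)\<bar> \<le> norm (P s - P t0) * (norm x)\<^sup>2" by (rule quad_abs_le)
      have q3: "- (x \<bullet> ((P s - P t0) *v x)) \<le> norm (P s - P t0) * (norm x)\<^sup>2"
        using q2 by (metis abs_le_D2)
      have q4: "(c - norm (P s - P t0)) * (norm x)\<^sup>2 = c * (norm x)\<^sup>2 - norm (P s - P t0) * (norm x)\<^sup>2"
        by (rule left_diff_distrib)
      have "(c - norm (P s - P t0)) * (norm x)\<^sup>2 > 0"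
        using nd \<open>x \<noteq> 0\<close> by (intro mult_pos_pos) auto
      thus "x \<bullet> (P s *v x) > 0" using e q1 q3 q4 by linarith
    qed
    have lt: "Inf S < t0 + d" using d(1) t0_def by simp
    have ne: "S \<noteq> {}" using tS by auto
    have "\<exists>s\<in>S. s < t0 + d" using lt cInf_less_iff[OF ne bS] by simp
    then obtain s where s: "s \<in> S" "s < t0 + d" by blast
    have "t0 \<le> s" unfolding t0_def using s(1) bS by (rule cInf_lower)
    moreover have "0 \<le> s" using s(1) by (simp add: S_def)
    ultimately have "pos_def (P s)" using s(2) by (intro near) (simp_all add: dist_real_def)
    thus False using s(1) by (simp add: S_def)
  next
    case False
    have "t0 \<noteq> 0" using False P0 by metis
    hence t0pos: "t0 > 0" using t00 by simp
    obtain x where x: "x \<noteq> 0" "\<not> x \<bullet> (P t0 *v x) > 0"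
      using False sym[OF t00] unfolding pos_def_def by blast
    have psd: "y \<bullet> (P t0 *v y) \<ge> 0" for y
    proof (rule ccontr)
      assume neg: "\<not> y \<bullet> (P t0 *v y) \<ge> 0"
      define g where "g = (\<lambda>s. y \<bullet> (P s *v y))"
      have "continuous (at t0 within {0..}) g"
        unfolding g_def using quad_vd[OF dP[OF t00], of y] by (rule DERIV_continuous)
      moreover have "- g t0 > 0" using neg by (simp add: g_def)
      ultimately obtain d where d: "d > 0" "\<forall>s\<in>{0..}. dist s t0 < d \<longrightarrow> dist (g s) (g t0) < - g t0"
        unfolding continuous_within_eps_delta by blast
      define s where "s = t0 - min d t0 / 2"
      have s: "0 \<le> s" "s < t0" "dist s t0 < d" using d(1) t0pos by (auto simp: s_def dist_real_def)
      have "dist (g s) (g t0) < - g t0" using d(2) s(1) s(3) by simp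
      hence "g s < 0" by (simp add: dist_real_def abs_less_iff)
      moreover have "g s \<ge> 0"
      proof (cases "y = 0")
        case True thus ?thesis by (simp add: g_def)
      next
        case False
        have "\<forall>x. x \<noteq> 0 \<longrightarrow> x \<bullet> (P s *v x) > 0" using before[OF s(1,2)] unfolding pos_def_def by blast
        hence "y \<bullet> (P s *v y) > 0" using False by blast
        thus ?thesis by (simp add: g_def)
      qed
      ultimately show False by simp
    qed
    have x0: "x \<bullet> (P t0 *v x) = 0" using x(2) psd[of x] by simp
    have Px: "P t0 *v x = 0" by (rule psd_zero[OF sym[OF t00] _ x0]) (use psd in auto)
    have der: "((\<lambda>s. x \<bullet> (P s *v x)) has_real_derivative x \<bullet> (Q *v x)) (at t0 within {0..})"
      using ric_quad_deriv[OF dP eq sym[OF t00] t00, of x] x0 Px by simp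
    have qpos: "x \<bullet> (Q *v x) > 0" using Qpd x(1) by (simp add: pos_def_def)
    obtain d where d: "d > 0" "\<forall>h>0. t0 - h \<in> {0..} \<longrightarrow> h < d \<longrightarrow> x \<bullet> (P (t0 - h) *v x) < x \<bullet> (P t0 *v x)"
      using has_real_derivative_pos_inc_left[OF der qpos] by blast
    define h where "h = min d t0 / 2"
    have h: "h > 0" "t0 - h \<in> {0..}" "h < d" "t0 - h < t0" using d(1) t0pos by (auto simp: h_def)
    have "x \<bullet> (P (t0 - h) *v x) < x \<bullet> (P t0 *v x)" using d(2) h(1,2,3) by blast
    hence "x \<bullet> (P (t0 - h) *v x) < 0" using x0 by simp
    moreover have "pos_def (P (t0 - h))" using before[of "t0 - h"] h by simp
    hence "\<forall>y. y \<noteq> 0 \<longrightarrow> y \<bullet> (P (t0 - h) *v y) > 0" unfolding pos_def_def by blast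
    hence "x \<bullet> (P (t0 - h) *v x) > 0" using x(1) by blast
    ultimately show False by simp
  qed
qed

lemma ric_upper:
  fixes P P1 A :: "real \<Rightarrow> real^'h^'h" and Q :: "real^'h^'h"
  assumes dP: "\<And>t. t \<ge> 0 \<Longrightarrow> (P has_vector_derivative P1 t) (at t within {0..})"
    and eq: "\<And>t. t \<ge> 0 \<Longrightarrow> P1 t = (- 2 * lam) *\<^sub>R P t + Q - P t ** A t ** P t"
    and sym: "\<And>t. t \<ge> 0 \<Longrightarrow> transpose (P t) = P t"
    and Apsd: "\<And>t x. x \<bullet> (A t *v x) \<ge> 0"
    and lam: "lam > 0" and Qpsd: "x \<bullet> (Q *v x) \<ge> 0"
    and t: "t \<ge> 0"
  shows "x \<bullet> (P t *v x) \<le> exp (- 2 * lam * t) * (x \<bullet> (P 0 *v x)) + x \<bullet> (Q *v x) / (2 * lam)"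
proof -
  define g0 where "g0 = x \<bullet> (P 0 *v x)"
  define q where "q = x \<bullet> (Q *v x)"
  define B where "B = (\<lambda>s. exp (- 2 * lam * s) * g0 + q / (2 * lam))"
  have dB: "(B has_real_derivative (- 2 * lam) * exp (- 2 * lam * s) * g0) (at s within {0..})" for s
    unfolding B_def by (auto intro!: derivative_eq_intros)
  have dy: "((\<lambda>s. x \<bullet> (P s *v x)) has_real_derivative
          (- 2 * lam) * (x \<bullet> (P s *v x)) + x \<bullet> (Q *v x) - (P s *v x) \<bullet> (A s *v (P s *v x))) (at s within {0..})"
    if "0 \<le> s" for s
    using ric_quad_deriv[OF dP eq sym[OF that] that] .
  have ineq: "(- 2 * lam) * (x \<bullet> (P s *v x)) + x \<bullet> (Q *v x) - (P s *v x) \<bullet> (A s *v (P s *v x))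
           - (- 2 * lam) * exp (- 2 * lam * s) * g0 \<le> 0 * (x \<bullet> (P s *v x) - B s)"
    if "0 \<le> s" "x \<bullet> (P s *v x) > B s" for s
  proof -
    have "(P s *v x) \<bullet> (A s *v (P s *v x)) \<ge> 0" by (rule Apsd)
    moreover have "(- 2 * lam) * (x \<bullet> (P s *v x)) < (- 2 * lam) * B s"
      using that(2) lam by simp
    moreover have "(- 2 * lam) * B s = (- 2 * lam) * exp (- 2 * lam * s) * g0 - x \<bullet> (Q *v x)"
      unfolding B_def q_def using lam by (simp add: distrib_left)
    ultimately show ?thesis by simp
  qed
  have "x \<bullet> (P t *v x) \<le> B t"
    by (rule cmp_lin[where L = 0 and a = 0, OF dy dB ineq _ t]) (use Qpsd lam in \<open>auto simp: B_def g0_def q_def\<close>)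
  thus ?thesis by (simp add: B_def g0_def q_def)
qed

declare transpose_matrix_vector[simp del] vector_transpose_matrix[simp del]

lemma mv_axis_comp:
  fixes A :: "real^'m^'n"
  shows "(A *v axis j 1) $ i = A $ i $ j"
  by (simp add: matrix_vector_mult_def axis_def if_distrib cong: if_cong)

lemma frob_bound:
  fixes A :: "real^'m^'n"
  assumes "\<And>x. norm (A *v x) \<le> b * norm x"
  shows "norm A \<le> real CARD('n) * real CARD('m) * b"
proof -
  have cb: "\<bar>A $ i $ j\<bar> \<le> b" for i j
  proof -
    have "\<bar>A $ i $ j\<bar> = \<bar>(A *v axis j 1) $ i\<bar>" by (simp add: mv_axis_comp)
    also have "\<dots> \<le> norm (A *v axis j 1)" by (rule component_le_norm_cart)
    also have "\<dots> \<le> b" using assms[of "axis j 1"] by (simp add: norm_axis_1)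
    finally show ?thesis .
  qed
  have "norm A \<le> (\<Sum>i\<in>UNIV. norm (A $ i))"
    unfolding norm_vec_def by (rule L2_set_le_sum) simp
  also have "\<dots> \<le> (\<Sum>i\<in>(UNIV::'n set). \<Sum>j\<in>(UNIV::'m set). b)"
  proof (rule sum_mono)
    fix i
    have "norm (A $ i) \<le> (\<Sum>j\<in>UNIV. \<bar>A $ i $ j\<bar>)" by (rule norm_le_l1_cart)
    also have "\<dots> \<le> (\<Sum>j\<in>(UNIV::'m set). b)" by (rule sum_mono) (rule cb)
    finally show "norm (A $ i) \<le> (\<Sum>j\<in>(UNIV::'m set). b)" .
  qed
  also have "\<dots> = real CARD('n) * real CARD('m) * b" by simp
  finally show ?thesis .
qed

lemma lower_inv_bound:
  fixes A B :: "real^'n^'n"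
  assumes c: "c > 0" and lb: "\<And>x. c * (norm x)\<^sup>2 \<le> x \<bullet> (A *v x)" and AB: "A ** B = mat 1"
  shows "norm (B *v y) \<le> (1 / c) * norm y"
proof -
  let ?z = "B *v y"
  have Az: "A *v ?z = y" using AB by (simp add: matrix_vector_mul_assoc)
  have "c * (norm ?z)\<^sup>2 \<le> ?z \<bullet> y" using lb[of ?z] Az by simp
  also have "\<dots> \<le> norm ?z * norm y" by (rule norm_cauchy_schwarz)
  finally have "c * (norm ?z)\<^sup>2 \<le> norm ?z * norm y" .
  hence "c * norm ?z \<le> norm y"
    by (cases "?z = 0") (auto simp: power2_eq_square mult.assoc)
  thus ?thesis using c by (simp add: field_simps)
qed

lemma inv_norm_bound:
  fixes A B :: "real^'n^'n"
  assumes c: "c > 0" and lb: "\<And>x. c * (norm x)\<^sup>2 \<le> x \<bullet> (A *v x)" and AB: "A ** B = mat 1"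
  shows "norm B \<le> real CARD('n) * real CARD('n) * (1 / c)"
  by (rule frob_bound) (rule lower_inv_bound[OF c lb AB])

lemma inv_sym:
  fixes A :: "real^'n^'n"
  assumes "pos_def A"
  shows "transpose (matrix_inv A) = matrix_inv A"
proof -
  have s: "transpose A = A" using assms by (simp add: pos_def_def)
  have "transpose (matrix_inv A) ** A = mat 1"
    using pd_inv(1)[OF assms] s by (metis matrix_transpose_mul transpose_mat)
  hence "transpose (matrix_inv A) = transpose (matrix_inv A) ** (A ** matrix_inv A)"
    using pd_inv(1)[OF assms] by simp
  also have "\<dots> = matrix_inv A" using \<open>transpose (matrix_inv A) ** A = mat 1\<close>
    by (simp add: matrix_mul_assoc)
  finally show ?thesis .
qed

lemma inv_psd:
  fixes A :: "real^'n^'n"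
  assumes "pos_def A"
  shows "y \<bullet> (matrix_inv A *v y) \<ge> 0"
proof -
  let ?w = "matrix_inv A *v y"
  have "A *v ?w = y" using pd_inv(1)[OF assms] by (simp add: matrix_vector_mul_assoc)
  hence "y \<bullet> ?w = ?w \<bullet> (A *v ?w)" by (simp add: inner_commute)
  also have "\<dots> \<ge> 0" using assms unfolding pos_def_def by (cases "?w = 0") (auto intro: less_imp_le)
  finally show ?thesis .
qed

lemma scal_f1:
  fixes u e :: real
  assumes "u \<ge> 0" "e > 0"
  shows "u * (e / (2 * (u + 1))) \<le> e / 2"
proof -
  have "u * (e / (2 * (u + 1))) = (e / 2) * (u / (u + 1))" by (simp add: field_simps)
  also have "\<dots> \<le> (e / 2) * 1" using assms by (intro mult_left_mono) auto
  finally show ?thesis by simp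
qed

lemma inv_vd:
  fixes P P1 :: "real \<Rightarrow> real^'h^'h"
  assumes dP: "\<And>t. t \<ge> 0 \<Longrightarrow> (P has_vector_derivative P1 t) (at t within {0..})"
    and pd: "\<And>t. t \<ge> 0 \<Longrightarrow> pos_def (P t)" and t: "t \<ge> 0"
  shows "((\<lambda>s. matrix_inv (P s)) has_vector_derivative - (matrix_inv (P t) ** P1 t ** matrix_inv (P t))) (at t within {0..})"
proof -
  define W where "W = (\<lambda>s. matrix_inv (P s))"
  have PW: "P s ** W s = mat 1" if "s \<ge> 0" for s using pd_inv(1)[OF pd[OF that]] by (simp add: W_def)
  have WP: "W s ** P s = mat 1" if "s \<ge> 0" for s using pd_inv(2)[OF pd[OF that]] by (simp add: W_def)
  have ident: "W s ** (P s - P t) ** W t = - (W s - W t)" if "s \<ge> 0" for s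
  proof -
    have "W s ** (P s - P t) ** W t = (W s ** P s) ** W t - W s ** (P t ** W t)"
      by (simp add: bounded_bilinear.diff_left[OF bounded_bilinear_mm]
            bounded_bilinear.diff_right[OF bounded_bilinear_mm] matrix_mul_assoc)
    also have "\<dots> = W t - W s" using PW[OF t] WP[OF that] by simp
    finally show ?thesis by simp
  qed
  obtain c where c: "c > 0" "\<And>x. c * (norm x)\<^sup>2 \<le> x \<bullet> (P t *v x)" using pd_lower[OF pd[OF t]] by blast
  have contP: "continuous (at t within {0..}) P" using dP[OF t] by (rule has_vector_derivative_continuous)
  have c2: "c / 2 > 0" using c by simp
  obtain d1 where d1: "d1 > 0" "\<forall>s\<in>{0..}. dist s t < d1 \<longrightarrow> dist (P s) (P t) < c / 2"
    using contP c2 unfolding continuous_within_eps_delta by metis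
  define K where "K = real CARD('h) * real CARD('h) * (1 / (c / 2))"
  have K0: "K \<ge> 0" using c by (simp add: K_def)
  have WsB: "norm (W s) \<le> K" if "s \<ge> 0" "dist s t < d1" for s
  proof -
    have nd: "norm (P s - P t) < c / 2" using d1 that by (simp add: dist_norm)
    have lb: "(c / 2) * (norm x)\<^sup>2 \<le> x \<bullet> (P s *v x)" for x
    proof -
      have e: "x \<bullet> (P s *v x) = x \<bullet> (P t *v x) + x \<bullet> ((P s - P t) *v x)"
        by (simp add: bounded_bilinear.diff_left[OF bounded_bilinear_mv] inner_diff_right)
      have q1: "c * (norm x)\<^sup>2 \<le> x \<bullet> (P t *v x)" by (rule c(2))
      have q2: "\<bar>x \<bullet> ((P s - P t) *v x)\<bar> \<le> norm (P s - P t) * (norm x)\<^sup>2" by (rule quad_abs_le)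
      have q3: "- (x \<bullet> ((P s - P t) *v x)) \<le> norm (P s - P t) * (norm x)\<^sup>2"
        using q2 by (metis abs_le_D2)
      have q4: "norm (P s - P t) * (norm x)\<^sup>2 \<le> (c / 2) * (norm x)\<^sup>2"
        using nd by (intro mult_right_mono) auto
      show ?thesis using e q1 q3 q4 by linarith
    qed
    show ?thesis unfolding K_def by (rule inv_norm_bound[OF c2 lb PW[OF that(1)]])
  qed
  define wt where "wt = norm (W t)"
  define p1 where "p1 = norm (P1 t)"
  have wt0: "wt \<ge> 0" and p10: "p1 \<ge> 0" by (simp_all add: wt_def p1_def)
  have Wdiff: "norm (W s - W t) \<le> K * norm (P s - P t) * wt" if "s \<ge> 0" "dist s t < d1" for s
  proof -
    have "norm (W s - W t) = norm (W s ** (P s - P t) ** W t)" using ident[OF that(1)] by (simp add: norm_minus_commute)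
    also have "\<dots> \<le> norm (W s) * norm (P s - P t) * wt"
      unfolding wt_def by (meson norm_mm mult_right_mono norm_ge_zero order_trans)
    also have "\<dots> \<le> K * norm (P s - P t) * wt"
      using WsB[OF that] wt0 by (intro mult_right_mono) auto
    finally show ?thesis .
  qed
  have derP: "\<forall>e>0. \<exists>d>0. \<forall>y\<in>{0..}. norm (y - t) < d \<longrightarrow>
      norm (P y - P t - (y - t) *\<^sub>R P1 t) \<le> e * norm (y - t)"
    using dP[OF t] unfolding has_vector_derivative_def has_derivative_within_alt by blast
  have "(W has_vector_derivative - (W t ** P1 t ** W t)) (at t within {0..})"
    unfolding has_vector_derivative_def has_derivative_within_alt
  proof (intro conjI allI impI)
    show "bounded_linear (\<lambda>h. h *\<^sub>R - (W t ** P1 t ** W t))" by (rule bounded_linear_scaleR_left)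
    fix e :: real assume e: "e > 0"
    define e1 where "e1 = e / (2 * (K * wt + 1))"
    have kw: "0 < K * wt + 1" using mult_nonneg_nonneg[OF K0 wt0] by linarith
    have pw: "0 < p1 * wt + 1" using mult_nonneg_nonneg[OF p10 wt0] by linarith
    have e1: "e1 > 0" unfolding e1_def using e kw by simp
    obtain d2 where d2: "d2 > 0" "\<forall>y\<in>{0..}. norm (y - t) < d2 \<longrightarrow>
      norm (P y - P t - (y - t) *\<^sub>R P1 t) \<le> e1 * norm (y - t)" using derP e1 by blast
    define e3 where "e3 = e / (2 * (p1 * wt + 1)) / (K * wt + 1)"
    have e3: "e3 > 0" unfolding e3_def using e kw pw by simp
    obtain d3 where d3: "d3 > 0" "\<forall>s\<in>{0..}. dist s t < d3 \<longrightarrow> dist (P s) (P t) < e3"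
      using contP e3 unfolding continuous_within_eps_delta by metis
    define d where "d = min d1 (min d2 d3)"
    have "d > 0" using d1 d2 d3 by (simp add: d_def)
    moreover have "norm (W y - W t - (y - t) *\<^sub>R - (W t ** P1 t ** W t)) \<le> e * norm (y - t)"
      if y: "y \<in> {0..}" "norm (y - t) < d" for y
    proof -
      have y0: "y \<ge> 0" using y by simp
      have yd1: "dist y t < d1" and yd2: "norm (y - t) < d2" and yd3: "dist y t < d3"
        using y by (auto simp: d_def dist_norm)
      define X where "X = W y ** (P y - P t - (y - t) *\<^sub>R P1 t) ** W t"
      define Y where "Y = (W y - W t) ** P1 t ** W t"
      have idt: "W y - W t - (y - t) *\<^sub>R - (W t ** P1 t ** W t) = - X - (y - t) *\<^sub>R Y"
      proof -
        have h1: "X = W y ** (P y - P t) ** W t - (y - t) *\<^sub>R (W y ** P1 t ** W t)"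
          unfolding X_def
          by (simp add: bounded_bilinear.diff_left[OF bounded_bilinear_mm] bounded_bilinear.diff_right[OF bounded_bilinear_mm]
               bounded_bilinear.scaleR_left[OF bounded_bilinear_mm] bounded_bilinear.scaleR_right[OF bounded_bilinear_mm])
        have h2: "Y = W y ** P1 t ** W t - W t ** P1 t ** W t"
          unfolding Y_def by (simp add: bounded_bilinear.diff_left[OF bounded_bilinear_mm])
        show ?thesis unfolding h1 h2 ident[OF y0] by (simp add: algebra_simps)
      qed
      have nX: "norm X \<le> K * (e1 * norm (y - t)) * wt"
      proof -
        have "norm X \<le> norm (W y) * norm (P y - P t - (y - t) *\<^sub>R P1 t) * wt"
          unfolding X_def wt_def by (meson norm_mm mult_right_mono norm_ge_zero order_trans)
        also have "\<dots> \<le> K * (e1 * norm (y - t)) * wt"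
          using WsB[OF y0 yd1] d2(2) y yd2 wt0 K0 by (intro mult_right_mono mult_mono) auto
        finally show ?thesis .
      qed
      have nY: "norm Y \<le> (K * e3 * wt) * p1 * wt"
      proof -
        have "norm Y \<le> norm (W y - W t) * p1 * wt"
          unfolding Y_def wt_def p1_def by (meson norm_mm mult_right_mono norm_ge_zero order_trans)
        also have "norm (W y - W t) \<le> K * e3 * wt"
        proof -
          have "norm (P y - P t) < e3" using d3(2) y yd3 by (simp add: dist_norm)
          hence "K * norm (P y - P t) * wt \<le> K * e3 * wt"
            using K0 wt0 by (intro mult_right_mono mult_left_mono) auto
          thus ?thesis using Wdiff[OF y0 yd1] by linarith
        qed
        hence "norm (W y - W t) * p1 * wt \<le> (K * e3 * wt) * p1 * wt"
          using p10 wt0 by (intro mult_right_mono) auto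
        finally show ?thesis .
      qed
      have f1: "K * (e1 * norm (y - t)) * wt \<le> e / 2 * norm (y - t)"
      proof -
        have "K * (e1 * norm (y - t)) * wt = ((K * wt) * (e / (2 * (K * wt + 1)))) * norm (y - t)"
          by (simp add: e1_def mult_ac)
        also have "\<dots> \<le> e / 2 * norm (y - t)"
          using scal_f1[of "K * wt" e] K0 wt0 e by (intro mult_right_mono) auto
        finally show ?thesis .
      qed
      have f2: "(K * e3 * wt) * p1 * wt \<le> e / 2"
      proof -
        have "(K * e3 * wt) * p1 * wt = ((K * wt) / (K * wt + 1)) * ((p1 * wt) * (e / (2 * (p1 * wt + 1))))"
          using K0 wt0 by (simp add: e3_def field_simps)
        also have "\<dots> \<le> 1 * (e / 2)"
        proof (rule mult_mono)
          show "K * wt / (K * wt + 1) \<le> 1" using kw by simp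
          show "p1 * wt * (e / (2 * (p1 * wt + 1))) \<le> e / 2"
            using scal_f1[of "p1 * wt" e] p10 wt0 e by simp
          show "0 \<le> p1 * wt * (e / (2 * (p1 * wt + 1)))" using p10 wt0 e pw by simp
        qed simp
        finally show ?thesis by simp
      qed
      have "norm (- X - (y - t) *\<^sub>R Y) \<le> norm X + norm (y - t) * norm Y"
        using norm_triangle_ineq4[of "- X" "(y - t) *\<^sub>R Y"] by simp
      also have "\<dots> \<le> e / 2 * norm (y - t) + norm (y - t) * (e / 2)"
        using nX f1 nY f2 by (intro add_mono mult_left_mono) auto
      finally show ?thesis unfolding idt by (simp add: algebra_simps)
    qed
    ultimately show "\<exists>d>0. \<forall>y\<in>{0..}. norm (y - t) < d \<longrightarrow>
        norm (W y - W t - (y - t) *\<^sub>R - (W t ** P1 t ** W t)) \<le> e * norm (y - t)" by blast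
  qed
  thus ?thesis by (simp add: W_def)
qed

lemma skew_quad:
  fixes S :: "real^'n^'n"
  assumes "transpose S = - S"
  shows "x \<bullet> (S *v x) = 0"
proof -
  have "x \<bullet> (S *v x) = (transpose S *v x) \<bullet> x" by (rule inner_mv_transpose)
  also have "\<dots> = - (x \<bullet> (S *v x))" using assms
    by (simp add: inner_commute bounded_bilinear.minus_left[OF bounded_bilinear_mv])
  finally show ?thesis by simp
qed

lemma amgm: fixes x y k :: real assumes "k > 0" shows "2 * (x * y) \<le> k * x\<^sup>2 + y\<^sup>2 / k"
proof -
  have "0 \<le> (k * x - y)\<^sup>2 / k" using assms by simp
  also have "\<dots> = k * x\<^sup>2 + y\<^sup>2 / k - 2 * (x * y)" using assms
    by (simp add: power2_eq_square field_simps)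
  finally show ?thesis by simp
qed

lemma sq_le_sq: fixes x y :: real assumes "0 \<le> x" "x \<le> y" shows "x\<^sup>2 \<le> y\<^sup>2"
  using assms by (simp add: power_mono)

lemma lyap_alg:
  fixes s sd d eps :: "real^'n" and z ta tad a a1 :: "real^'h"
    and M Md C K Ri :: "real^'n^'n" and \<Phi> :: "real^'h^'n" and P P1 Q :: "real^'h^'h"
  assumes hM: "M *v sd = - (C *v s) - K *v s - \<Phi> *v ta + d"
    and hskew: "transpose (Md - 2 *\<^sub>R C) = - (Md - 2 *\<^sub>R C)"
    and hMsym: "transpose M = M"
    and hPsym: "transpose P = P" and hPz: "P *v z = ta"
    and hatd: "tad = - lam *\<^sub>R (ta + a) - P *v (transpose \<Phi> *v (Ri *v (\<Phi> *v ta - d - eps)))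
                 + P *v (transpose \<Phi> *v s) - a1"
    and hP1: "P1 = (- 2 * lam) *\<^sub>R P + Q - P ** transpose \<Phi> ** Ri ** \<Phi> ** P"
    and hRi: "transpose Ri = Ri" "\<And>y. y \<bullet> (Ri *v y) \<ge> 0"
    and hK: "\<And>x. kk * (norm x)\<^sup>2 \<le> x \<bullet> (K *v x)" and kk: "kk > 0"
    and hQ: "\<And>x. qm * (norm x)\<^sup>2 \<le> x \<bullet> (Q *v x)" and qm: "qm > 0"
    and hMs: "0 \<le> s \<bullet> (M *v s)" "s \<bullet> (M *v s) \<le> m2 * (norm s)\<^sup>2" and m2: "m2 > 0"
    and hPs: "0 \<le> z \<bullet> (P *v z)" "z \<bullet> (P *v z) \<le> pU * (norm z)\<^sup>2" and pU: "pU > 0"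
    and lam: "lam \<ge> 0"
  shows "2 * (s \<bullet> (M *v sd)) + s \<bullet> (Md *v s) + (2 * (z \<bullet> tad) - z \<bullet> (P1 *v z))
     \<le> - min (kk / m2) (qm / (2 * pU)) * (s \<bullet> (M *v s) + z \<bullet> (P *v z))
        + (norm Ri + 1 / kk + 2 / qm) * (norm d + norm eps + lam * norm a + norm a1)\<^sup>2"
proof -
  define v where "v = \<Phi> *v ta"
  define w where "w = d + eps"
  have zP: "z \<bullet> (P *v y) = ta \<bullet> y" for y
    using inner_mv_transpose[of z P y] hPsym hPz by simp
  have aPhi: "ta \<bullet> (transpose \<Phi> *v y) = v \<bullet> y" for y
    using inner_mv_transpose[of ta "transpose \<Phi>" y] by (simp add: v_def)
  have F1: "s \<bullet> (M *v sd) = - (s \<bullet> (C *v s)) - s \<bullet> (K *v s) - s \<bullet> v + s \<bullet> d"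
    unfolding hM v_def by (simp add: inner_diff_right inner_add_right)
  have F2: "s \<bullet> (Md *v s) = 2 * (s \<bullet> (C *v s))"
  proof -
    have "s \<bullet> ((Md - 2 *\<^sub>R C) *v s) = 0" by (rule skew_quad[OF hskew])
    thus ?thesis by (simp add: bounded_bilinear.diff_left[OF bounded_bilinear_mv]
          bounded_bilinear.scaleR_left[OF bounded_bilinear_mv] inner_diff_right)
  qed
  have F3: "z \<bullet> tad = - lam * (z \<bullet> ta) - lam * (z \<bullet> a) - (v \<bullet> (Ri *v v) - v \<bullet> (Ri *v w)) + v \<bullet> s - z \<bullet> a1"
  proof -
    have "z \<bullet> (P *v (transpose \<Phi> *v (Ri *v (\<Phi> *v ta - d - eps)))) = v \<bullet> (Ri *v (v - w))"
      unfolding zP aPhi by (simp add: v_def w_def algebra_simps)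
    moreover have "z \<bullet> (P *v (transpose \<Phi> *v s)) = v \<bullet> s" unfolding zP aPhi ..
    moreover have "v \<bullet> (Ri *v (v - w)) = v \<bullet> (Ri *v v) - v \<bullet> (Ri *v w)"
      by (simp add: bounded_bilinear.diff_right[OF bounded_bilinear_mv] inner_diff_right)
    ultimately show ?thesis unfolding hatd
      by (simp add: inner_diff_right inner_add_right algebra_simps)
  qed
  have F4: "z \<bullet> (P1 *v z) = - 2 * lam * (z \<bullet> (P *v z)) + z \<bullet> (Q *v z) - v \<bullet> (Ri *v v)"
  proof -
    have "(P ** transpose \<Phi> ** Ri ** \<Phi> ** P) *v z = P *v (transpose \<Phi> *v (Ri *v (\<Phi> *v (P *v z))))"
      by (simp add: matrix_vector_mul_assoc matrix_mul_assoc)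
    hence "z \<bullet> ((P ** transpose \<Phi> ** Ri ** \<Phi> ** P) *v z) = v \<bullet> (Ri *v v)"
      using hPz by (simp add: zP aPhi v_def)
    thus ?thesis unfolding hP1
      by (simp add: bounded_bilinear.diff_left[OF bounded_bilinear_mv] matrix_vector_mult_add_rdistrib
          bounded_bilinear.scaleR_left[OF bounded_bilinear_mv] inner_diff_right inner_add_right)
  qed
  have F5: "z \<bullet> ta = z \<bullet> (P *v z)" using hPz by simp
  have F6: "s \<bullet> v = v \<bullet> s" by (rule inner_commute)
  have F7: "z \<bullet> a1 + lam * (z \<bullet> a) = z \<bullet> (lam *\<^sub>R a + a1)" by (simp add: inner_add_right)
  define ns where "ns = norm s"
  define nz where "nz = norm z"
  define nd where "nd = norm d"
  define ne where "ne = norm eps"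
  define na where "na = norm a"
  define na1 where "na1 = norm a1"
  define \<beta> where "\<beta> = nd + ne + lam * na + na1"
  have I1: "kk * ns\<^sup>2 \<le> s \<bullet> (K *v s)" using hK unfolding ns_def .
  have I2: "2 * (s \<bullet> d) \<le> kk * ns\<^sup>2 + nd\<^sup>2 / kk"
  proof -
    have "s \<bullet> d \<le> ns * nd" unfolding ns_def nd_def by (rule norm_cauchy_schwarz)
    thus ?thesis using amgm[OF kk, of ns nd] by linarith
  qed
  have I3: "- (v \<bullet> (Ri *v v)) + 2 * (v \<bullet> (Ri *v w)) \<le> norm Ri * (nd + ne)\<^sup>2"
  proof -
    have "0 \<le> (v - w) \<bullet> (Ri *v (v - w))" by (rule hRi(2))
    also have "\<dots> = v \<bullet> (Ri *v v) - 2 * (v \<bullet> (Ri *v w)) + w \<bullet> (Ri *v w)"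
      using sym_inner[OF hRi(1), of w v]
      by (simp add: bounded_bilinear.diff_right[OF bounded_bilinear_mv] inner_diff_right inner_diff_left)
    finally have a1: "- (v \<bullet> (Ri *v v)) + 2 * (v \<bullet> (Ri *v w)) \<le> w \<bullet> (Ri *v w)" by linarith
    have "w \<bullet> (Ri *v w) \<le> norm Ri * (norm w)\<^sup>2" using quad_abs_le[of w Ri] by linarith
    also have "\<dots> \<le> norm Ri * (nd + ne)\<^sup>2"
    proof (rule mult_left_mono[OF sq_le_sq])
      show "norm w \<le> nd + ne" unfolding w_def nd_def ne_def by (rule norm_triangle_ineq)
    qed simp_all
    finally show ?thesis using a1 by linarith
  qed
  have I4: "qm * nz\<^sup>2 \<le> z \<bullet> (Q *v z)" using hQ unfolding nz_def .
  have I5: "- 2 * (z \<bullet> (lam *\<^sub>R a + a1)) \<le> qm / 2 * nz\<^sup>2 + 2 / qm * (lam * na + na1)\<^sup>2"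
  proof -
    have nb: "norm (lam *\<^sub>R a + a1) \<le> lam * na + na1"
      using norm_triangle_ineq[of "lam *\<^sub>R a" a1] lam by (simp add: na_def na1_def)
    have "- (z \<bullet> (lam *\<^sub>R a + a1)) \<le> nz * norm (lam *\<^sub>R a + a1)"
      using norm_cauchy_schwarz[of "- z" "lam *\<^sub>R a + a1"] by (simp add: nz_def)
    also have "\<dots> \<le> nz * (lam * na + na1)" using nb by (intro mult_left_mono) (auto simp: nz_def)
    finally have "- (z \<bullet> (lam *\<^sub>R a + a1)) \<le> nz * (lam * na + na1)" .
    moreover have "2 * (nz * (lam * na + na1)) \<le> qm / 2 * nz\<^sup>2 + (lam * na + na1)\<^sup>2 / (qm / 2)"
      using amgm[of "qm / 2" nz "lam * na + na1"] qm by simp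
    ultimately show ?thesis by (simp add: field_simps)
  qed
  have b0: "0 \<le> nd" "0 \<le> ne" "0 \<le> lam * na" "0 \<le> na1" using lam by (simp_all add: nd_def ne_def na_def na1_def)
  have S1: "(nd + ne)\<^sup>2 \<le> \<beta>\<^sup>2" unfolding \<beta>_def using b0 by (intro sq_le_sq) auto
  have S2: "nd\<^sup>2 \<le> \<beta>\<^sup>2" unfolding \<beta>_def using b0 by (intro sq_le_sq) auto
  have S3: "(lam * na + na1)\<^sup>2 \<le> \<beta>\<^sup>2" unfolding \<beta>_def using b0 by (intro sq_le_sq) auto
  have T1: "norm Ri * (nd + ne)\<^sup>2 \<le> norm Ri * \<beta>\<^sup>2" using S1 by (intro mult_left_mono) auto
  have T2: "nd\<^sup>2 / kk \<le> \<beta>\<^sup>2 / kk" using S2 kk by (intro divide_right_mono) auto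
  have T3: "2 / qm * (lam * na + na1)\<^sup>2 \<le> 2 / qm * \<beta>\<^sup>2" using S3 qm by (intro mult_left_mono) auto
  define \<gamma> where "\<gamma> = min (kk / m2) (qm / (2 * pU))"
  have G1: "\<gamma> * (s \<bullet> (M *v s)) \<le> kk * ns\<^sup>2"
  proof -
    have "\<gamma> * (s \<bullet> (M *v s)) \<le> (kk / m2) * (s \<bullet> (M *v s))"
      using hMs(1) by (intro mult_right_mono) (auto simp: \<gamma>_def)
    also have "\<dots> \<le> (kk / m2) * (m2 * ns\<^sup>2)" using hMs(2) kk m2 by (intro mult_left_mono) (auto simp: ns_def)
    also have "\<dots> = kk * ns\<^sup>2" using m2 by simp
    finally show ?thesis .
  qed
  have G2: "\<gamma> * (z \<bullet> (P *v z)) \<le> qm / 2 * nz\<^sup>2"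
  proof -
    have "\<gamma> * (z \<bullet> (P *v z)) \<le> (qm / (2 * pU)) * (z \<bullet> (P *v z))"
      using hPs(1) by (intro mult_right_mono) (auto simp: \<gamma>_def)
    also have "\<dots> \<le> (qm / (2 * pU)) * (pU * nz\<^sup>2)" using hPs(2) qm pU by (intro mult_left_mono) (auto simp: nz_def)
    also have "\<dots> = qm / 2 * nz\<^sup>2" using pU by simp
    finally show ?thesis .
  qed
  have GG: "(norm Ri + 1 / kk + 2 / qm) * \<beta>\<^sup>2 = norm Ri * \<beta>\<^sup>2 + \<beta>\<^sup>2 / kk + 2 / qm * \<beta>\<^sup>2"
    by (simp add: algebra_simps)
  have "2 * (s \<bullet> (M *v sd)) + s \<bullet> (Md *v s) + (2 * (z \<bullet> tad) - z \<bullet> (P1 *v z))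
        = - 2 * (s \<bullet> (K *v s)) + 2 * (s \<bullet> d) - 2 * (z \<bullet> (lam *\<^sub>R a + a1))
          + (- (v \<bullet> (Ri *v v)) + 2 * (v \<bullet> (Ri *v w))) - z \<bullet> (Q *v z)"
    using F1 F2 F3 F4 F5 F6 F7 by (simp add: algebra_simps)
  also have "\<dots> \<le> - kk * ns\<^sup>2 - qm / 2 * nz\<^sup>2 + (norm Ri * \<beta>\<^sup>2 + \<beta>\<^sup>2 / kk + 2 / qm * \<beta>\<^sup>2)"
    using I1 I2 I3 I4 I5 T1 T2 T3 by linarith
  also have "\<dots> \<le> - \<gamma> * (s \<bullet> (M *v s) + z \<bullet> (P *v z)) + (norm Ri + 1 / kk + 2 / qm) * \<beta>\<^sup>2"
    using G1 G2 GG by (simp add: algebra_simps)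
  finally show ?thesis unfolding \<gamma>_def \<beta>_def ns_def nz_def nd_def ne_def na_def na1_def .
qed

lemma lyap:
  fixes M :: "real^'n \<Rightarrow> real^'n^'n"
    and DM :: "real^'n \<Rightarrow> real^'n \<Rightarrow> real^'n^'n"
    and C :: "real^'n \<Rightarrow> real^'n \<Rightarrow> real^'n^'n"
    and \<phi> :: "real^'n \<Rightarrow> real^'n \<Rightarrow> real^'h^'n"
    and K \<Lambda> R :: "real^'n^'n"
    and Q :: "real^'h^'h"
    and lam :: real
    and g :: "real^'n \<Rightarrow> real^'n" and f :: "real^'n \<Rightarrow> real^'n \<Rightarrow> 'w \<Rightarrow> real^'n" and w :: "real \<Rightarrow> 'w"
    and q q1 q2 qd qd1 qd2 u eps :: "real \<Rightarrow> real^'n"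
    and ah ah1 a a1 :: "real \<Rightarrow> real^'h" and P P1 :: "real \<Rightarrow> real^'h^'h"
    and s :: "real \<Rightarrow> real^'n" and V \<beta> :: "real \<Rightarrow> real"
  assumes Msym: "\<And>x. transpose (M x) = M x"
    and Mlow: "\<And>x v. m1 * (norm v)\<^sup>2 \<le> v \<bullet> (M x *v v)"
    and Mup: "\<And>x v. v \<bullet> (M x *v v) \<le> m2 * (norm v)\<^sup>2" and m1: "m1 > 0" and m12: "m1 \<le> m2"
    and M_deriv: "\<And>x. (M has_derivative DM x) (at x)"
    and skew: "\<And>x v. skew_symmetric (DM x v - 2 *\<^sub>R C x v)"
    and Bphi: "\<And>x xd z. norm (\<phi> x xd *v z) \<le> B0 * norm z"
    and hK: "\<And>x. kk * (norm x)\<^sup>2 \<le> x \<bullet> (K *v x)" and kk: "kk > 0"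
    and Qpd: "pos_def Q" and hQ: "\<And>x. qm * (norm x)\<^sup>2 \<le> x \<bullet> (Q *v x)" and qm: "qm > 0"
    and Rpd: "pos_def R" and lam: "lam > 0"
    and der: "\<And>t. t \<ge> 0 \<Longrightarrow> (q has_vector_derivative q1 t) (at t within {0..}) \<and>
              (q1 has_vector_derivative q2 t) (at t within {0..}) \<and>
              (qd has_vector_derivative qd1 t) (at t within {0..}) \<and>
              (qd1 has_vector_derivative qd2 t) (at t within {0..}) \<and>
              (ah has_vector_derivative ah1 t) (at t within {0..}) \<and>
              (P has_vector_derivative P1 t) (at t within {0..}) \<and>
              (a has_vector_derivative a1 t) (at t within {0..})"
    and P0: "pos_def (P 0)"
    and dyn: "\<And>t. t \<ge> 0 \<Longrightarrow> M (q t) *v q2 t + C (q t) (q1 t) *v q1 t + g (q t) = u t + f (q t) (q1 t) (w t)"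
    and ctrl: "\<And>t. t \<ge> 0 \<Longrightarrow> u t = M (q t) *v (qd2 t - \<Lambda> *v (q1 t - qd1 t)) + C (q t) (q1 t) *v (qd1 t - \<Lambda> *v (q t - qd t))
                 + g (q t) - K *v (q1 t - (qd1 t - \<Lambda> *v (q t - qd t))) - \<phi> (q t) (q1 t) *v ah t"
    and adapt: "\<And>t. t \<ge> 0 \<Longrightarrow> ah1 t = - lam *\<^sub>R ah t - P t *v (transpose (\<phi> (q t) (q1 t)) *v (matrix_inv R *v
                  (\<phi> (q t) (q1 t) *v ah t - (f (q t) (q1 t) (w t) + eps t))))
                  + P t *v (transpose (\<phi> (q t) (q1 t)) *v (q1 t - (qd1 t - \<Lambda> *v (q t - qd t))))"
    and ric: "\<And>t. t \<ge> 0 \<Longrightarrow> P1 t = (- 2 * lam) *\<^sub>R P t + Q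
                  - P t ** transpose (\<phi> (q t) (q1 t)) ** matrix_inv R ** \<phi> (q t) (q1 t) ** P t"
    and sdef: "s = (\<lambda>t. q1 t - (qd1 t - \<Lambda> *v (q t - qd t)))"
    and Vdef: "V = (\<lambda>t. s t \<bullet> (M (q t) *v s t) + (ah t - a t) \<bullet> (matrix_inv (P t) *v (ah t - a t)))"
    and \<beta>def: "\<beta> = (\<lambda>t. norm (f (q t) (q1 t) (w t) - \<phi> (q t) (q1 t) *v a t) + norm (eps t) + lam * norm (a t) + norm (a1 t))"
  shows "\<exists>T1\<ge>0. \<exists>V'. \<forall>t\<ge>T1. (V has_real_derivative V' t) (at t within {T1..}) \<and>
      V' t \<le> - min (kk / m2) (qm / (2 * (1 + norm Q / (2 * lam)))) * V t
              + (norm (matrix_inv R) + 1 / kk + 2 / qm) * (\<beta> t)\<^sup>2 \<and>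
      (norm (s t))\<^sup>2 \<le> V t / m1"
proof -
  define Ri where "Ri = matrix_inv R"
  have RiS: "transpose Ri = Ri" unfolding Ri_def by (rule inv_sym[OF Rpd])
  have RiP: "\<And>y. y \<bullet> (Ri *v y) \<ge> 0" unfolding Ri_def by (rule inv_psd[OF Rpd])
  define \<Phi> where "\<Phi> = (\<lambda>t. \<phi> (q t) (q1 t))"
  define A where "A = (\<lambda>t. transpose (\<Phi> t) ** Ri ** \<Phi> t)"
  have Asym: "transpose (A t) = A t" for t
    unfolding A_def by (simp add: matrix_transpose_mul RiS matrix_mul_assoc)
  have Apsd: "x \<bullet> (A t *v x) \<ge> 0" for t x
  proof -
    have "A t *v x = transpose (\<Phi> t) *v (Ri *v (\<Phi> t *v x))" unfolding A_def by (simp add: matrix_vector_mul_assoc matrix_mul_assoc)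
    hence "x \<bullet> (A t *v x) = (\<Phi> t *v x) \<bullet> (Ri *v (\<Phi> t *v x))"
      using inner_mv_transpose[of x "transpose (\<Phi> t)"] by simp
    thus ?thesis using RiP by simp
  qed
  define nb where "nb = real CARD('n) * real CARD('h) * B0"
  have nPhi: "norm (\<Phi> t) \<le> nb" for t unfolding nb_def \<Phi>_def by (rule frob_bound) (rule Bphi)
  have Abd: "norm (A t) \<le> nb * norm Ri * nb" for t
  proof -
    have "norm (A t) \<le> norm (transpose (\<Phi> t)) * norm Ri * norm (\<Phi> t)"
      unfolding A_def by (meson norm_mm mult_right_mono norm_ge_zero order_trans)
    also have "\<dots> \<le> nb * norm Ri * nb"
    proof -
      have nb0: "0 \<le> nb" using nPhi[of t] norm_ge_zero order_trans by blast
      show ?thesis using nPhi[of t] nb0 by (intro mult_mono) (auto simp: norm_transpose)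
    qed
    finally show ?thesis .
  qed
  have dP: "(P has_vector_derivative P1 t) (at t within {0..})" if "t \<ge> 0" for t using der[OF that] by blast
  have ric': "P1 t = (- 2 * lam) *\<^sub>R P t + Q - P t ** A t ** P t" if "t \<ge> 0" for t
    using ric[OF that] by (simp add: A_def \<Phi>_def Ri_def matrix_mul_assoc)
  have Qsym: "transpose Q = Q" using Qpd by (simp add: pos_def_def)
  have P0sym: "transpose (P 0) = P 0" using P0 by (simp add: pos_def_def)
  have Psym: "transpose (P t) = P t" if "t \<ge> 0" for t by (rule ric_sym[OF dP ric' Asym Abd Qsym P0sym that])
  have Ppd: "pos_def (P t)" if "t \<ge> 0" for t by (rule ric_pd[OF dP ric' Asym Apsd Abd Qpd P0 that])
  define pU where "pU = 1 + norm Q / (2 * lam)"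
  have pU: "pU > 0" unfolding pU_def using lam by (simp add: add_pos_nonneg)
  define T1 where "T1 = ln (norm (P 0) + 1) / (2 * lam)"
  have T10: "T1 \<ge> 0" unfolding T1_def using lam by simp
  have Pup: "z \<bullet> (P t *v z) \<le> pU * (norm z)\<^sup>2" if "t \<ge> T1" for t z
  proof -
    have t0: "t \<ge> 0" using that T10 by simp
    have "0 \<le> qm * (norm z)\<^sup>2" using qm by simp
    hence Qz: "z \<bullet> (Q *v z) \<ge> 0" using hQ[of z] by linarith
    have "z \<bullet> (P t *v z) \<le> exp (- 2 * lam * t) * (z \<bullet> (P 0 *v z)) + z \<bullet> (Q *v z) / (2 * lam)"
      by (rule ric_upper[OF dP ric' Psym Apsd lam Qz t0])
    also have "exp (- 2 * lam * t) * (z \<bullet> (P 0 *v z)) \<le> 1 * (norm z)\<^sup>2"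
    proof -
      have ex: "exp (- 2 * lam * t) \<le> exp (- 2 * lam * T1)" using that lam by simp
      have "- 2 * lam * T1 = - ln (norm (P 0) + 1)" unfolding T1_def using lam by simp
      moreover have "0 < norm (P 0) + 1" by (simp add: add_nonneg_pos)
      ultimately have "exp (- 2 * lam * T1) = 1 / (norm (P 0) + 1)"
        by (simp add: exp_minus divide_inverse)
      hence "exp (- 2 * lam * t) * norm (P 0) \<le> (1 / (norm (P 0) + 1)) * norm (P 0)"
        using ex by (intro mult_right_mono) auto
      also have "\<dots> \<le> 1"
      proof -
        have "0 < norm (P 0) + 1" by (simp add: add_nonneg_pos)
        thus ?thesis by (simp add: divide_le_eq)
      qed
      finally have e1: "exp (- 2 * lam * t) * norm (P 0) \<le> 1" .
      have "z \<bullet> (P 0 *v z) \<le> norm (P 0) * (norm z)\<^sup>2" using quad_abs_le[of z "P 0"] by linarith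
      hence "exp (- 2 * lam * t) * (z \<bullet> (P 0 *v z)) \<le> exp (- 2 * lam * t) * (norm (P 0) * (norm z)\<^sup>2)"
        by (intro mult_left_mono) auto
      also have "\<dots> = (exp (- 2 * lam * t) * norm (P 0)) * (norm z)\<^sup>2" by (simp add: mult.assoc)
      also have "\<dots> \<le> 1 * (norm z)\<^sup>2" using e1 by (intro mult_right_mono) auto
      finally show ?thesis .
    qed
    also have "z \<bullet> (Q *v z) / (2 * lam) \<le> norm Q * (norm z)\<^sup>2 / (2 * lam)"
      using quad_abs_le[of z Q] lam by (intro divide_right_mono) auto
    finally show ?thesis unfolding pU_def by (simp add: algebra_simps add_divide_distrib)
  qed
  have dq: "(q has_vector_derivative q1 t) (at t within {0..})" if "t \<ge> 0" for t using der[OF that] by blast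
  have dq1: "(q1 has_vector_derivative q2 t) (at t within {0..})" if "t \<ge> 0" for t using der[OF that] by blast
  have dqd: "(qd has_vector_derivative qd1 t) (at t within {0..})" if "t \<ge> 0" for t using der[OF that] by blast
  have dqd1: "(qd1 has_vector_derivative qd2 t) (at t within {0..})" if "t \<ge> 0" for t using der[OF that] by blast
  have dah: "(ah has_vector_derivative ah1 t) (at t within {0..})" if "t \<ge> 0" for t using der[OF that] by blast
  have da: "(a has_vector_derivative a1 t) (at t within {0..})" if "t \<ge> 0" for t using der[OF that] by blast
  define W where "W = (\<lambda>t. matrix_inv (P t))"
  have PW: "P t ** W t = mat 1" if "t \<ge> 0" for t unfolding W_def by (rule pd_inv(1)[OF Ppd[OF that]])
  have Wsym: "transpose (W t) = W t" if "t \<ge> 0" for t unfolding W_def by (rule inv_sym[OF Ppd[OF that]])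
  have dW: "(W has_vector_derivative - (W t ** P1 t ** W t)) (at t within {0..})" if "t \<ge> 0" for t
    unfolding W_def by (rule inv_vd[OF dP Ppd that])
  define ta where "ta = (\<lambda>t. ah t - a t)"
  define tad where "tad = (\<lambda>t. ah1 t - a1 t)"
  have dta: "(ta has_vector_derivative tad t) (at t within {0..})" if "t \<ge> 0" for t
    unfolding ta_def tad_def by (rule has_vector_derivative_diff[OF dah[OF that] da[OF that]])
  define sd where "sd = (\<lambda>t. q2 t - (qd2 t - \<Lambda> *v (q1 t - qd1 t)))"
  have ds: "(s has_vector_derivative sd t) (at t within {0..})" if "t \<ge> 0" for t
  proof -
    have d1: "((\<lambda>t. q t - qd t) has_vector_derivative (q1 t - qd1 t)) (at t within {0..})"
      by (rule has_vector_derivative_diff[OF dq[OF that] dqd[OF that]])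
    have d2: "((\<lambda>t. \<Lambda> *v (q t - qd t)) has_vector_derivative \<Lambda> *v (q1 t - qd1 t)) (at t within {0..})"
      by (rule bounded_linear.has_vector_derivative[OF matrix_vector_mul_bounded_linear d1])
    show ?thesis unfolding sdef sd_def
      by (rule has_vector_derivative_diff[OF dq1[OF that] has_vector_derivative_diff[OF dqd1[OF that] d2]])
  qed
  have dMq: "((\<lambda>s. M (q s)) has_vector_derivative DM (q t) (q1 t)) (at t within {0..})" if "t \<ge> 0" for t
  proof -
    have "((M \<circ> q) has_vector_derivative DM (q t) (q1 t)) (at t within {0..})"
      by (rule vector_derivative_diff_chain_within[OF dq[OF that] has_derivative_at_withinI[OF M_deriv]])
    thus ?thesis by (simp add: o_def)
  qed
  define z where "z = (\<lambda>t. W t *v ta t)"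
  define V' where "V' = (\<lambda>t. 2 * (s t \<bullet> (M (q t) *v sd t)) + s t \<bullet> (DM (q t) (q1 t) *v s t)
        + (2 * (z t \<bullet> tad t) - z t \<bullet> (P1 t *v z t)))"
  have dV: "(V has_real_derivative V' t) (at t within {0..})" if t0: "t \<ge> 0" for t
  proof -
    have dV1: "((\<lambda>t. s t \<bullet> (M (q t) *v s t)) has_real_derivative
        (s t \<bullet> (M (q t) *v sd t + DM (q t) (q1 t) *v s t) + sd t \<bullet> (M (q t) *v s t))) (at t within {0..})"
      by (rule inner_vd[OF ds[OF t0] mv_vd[OF dMq[OF t0] ds[OF t0]]])
    have dV2: "((\<lambda>t. ta t \<bullet> (W t *v ta t)) has_real_derivative
        (ta t \<bullet> (W t *v tad t + (- (W t ** P1 t ** W t)) *v ta t) + tad t \<bullet> (W t *v ta t))) (at t within {0..})"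
      by (rule inner_vd[OF dta[OF t0] mv_vd[OF dW[OF t0] dta[OF t0]]])
    have V: "V = (\<lambda>t. s t \<bullet> (M (q t) *v s t) + ta t \<bullet> (W t *v ta t))"
      unfolding Vdef ta_def W_def ..
    have e1: "sd t \<bullet> (M (q t) *v s t) = s t \<bullet> (M (q t) *v sd t)" by (rule sym_inner[OF Msym])
    have e2: "ta t \<bullet> (W t *v tad t) = z t \<bullet> tad t"
      using inner_mv_transpose[of "ta t" "W t" "tad t"] Wsym[OF t0] by (simp add: z_def)
    have e3: "ta t \<bullet> ((W t ** P1 t ** W t) *v ta t) = z t \<bullet> (P1 t *v z t)"
    proof -
      have "(W t ** P1 t ** W t) *v ta t = W t *v (P1 t *v z t)" by (simp add: z_def matrix_vector_mul_assoc matrix_mul_assoc)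
      thus ?thesis using inner_mv_transpose[of "ta t" "W t" "P1 t *v z t"] Wsym[OF t0] by (simp add: z_def)
    qed
    have e4: "tad t \<bullet> (W t *v ta t) = z t \<bullet> tad t" by (simp add: z_def inner_commute)
    have a1: "s t \<bullet> (M (q t) *v sd t + DM (q t) (q1 t) *v s t) = s t \<bullet> (M (q t) *v sd t) + s t \<bullet> (DM (q t) (q1 t) *v s t)"
      by (rule inner_add_right)
    have a2: "ta t \<bullet> (W t *v tad t + (- (W t ** P1 t ** W t)) *v ta t) = ta t \<bullet> (W t *v tad t) - ta t \<bullet> ((W t ** P1 t ** W t) *v ta t)"
      by (simp add: inner_add_right inner_diff_right bounded_bilinear.minus_left[OF bounded_bilinear_mv])
    have eqD: "(s t \<bullet> (M (q t) *v sd t + DM (q t) (q1 t) *v s t) + sd t \<bullet> (M (q t) *v s t))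
       + (ta t \<bullet> (W t *v tad t + (- (W t ** P1 t ** W t)) *v ta t) + tad t \<bullet> (W t *v ta t)) = V' t"
      unfolding V'_def using a1 a2 e1 e2 e3 e4 by linarith
    show ?thesis unfolding V by (rule DERIV_cong[OF DERIV_add[OF dV1 dV2] eqD])
  qed
  define dd where "dd = (\<lambda>t. f (q t) (q1 t) (w t) - \<Phi> t *v a t)"
  have main: "\<forall>t\<ge>T1. (V has_real_derivative V' t) (at t within {T1..}) \<and>
      V' t \<le> - min (kk / m2) (qm / (2 * (1 + norm Q / (2 * lam)))) * V t
              + (norm (matrix_inv R) + 1 / kk + 2 / qm) * (\<beta> t)\<^sup>2 \<and>
      (norm (s t))\<^sup>2 \<le> V t / m1"
  proof (intro allI impI conjI)
    fix t assume tT: "T1 \<le> t"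
    have t0: "t \<ge> 0" using tT T10 by simp
    show "(V has_real_derivative V' t) (at t within {T1..})"
      by (rule DERIV_subset[OF dV[OF t0]]) (use T10 in auto)
    have hPz: "P t *v z t = ta t" using PW[OF t0] by (simp add: z_def matrix_vector_mul_assoc)
    have hPs0: "0 \<le> z t \<bullet> (P t *v z t)"
    proof (cases "z t = 0")
      case True thus ?thesis by simp
    next
      case False thus ?thesis using Ppd[OF t0] unfolding pos_def_def by (auto intro: less_imp_le)
    qed
    have hMs0: "0 \<le> s t \<bullet> (M (q t) *v s t)"
    proof -
      have "0 \<le> m1 * (norm (s t))\<^sup>2" using m1 by simp
      thus ?thesis using Mlow[of "s t" "q t"] by linarith
    qed
    have Veq: "V t = s t \<bullet> (M (q t) *v s t) + z t \<bullet> (P t *v z t)"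
    proof -
      have "(ah t - a t) \<bullet> (matrix_inv (P t) *v (ah t - a t)) = ta t \<bullet> z t" by (simp add: z_def W_def ta_def)
      also have "\<dots> = z t \<bullet> (P t *v z t)" using hPz by (simp add: inner_commute)
      finally show ?thesis by (simp add: Vdef)
    qed
    show "(norm (s t))\<^sup>2 \<le> V t / m1"
    proof -
      have "m1 * (norm (s t))\<^sup>2 \<le> V t" using Mlow[of "s t" "q t"] hPs0 Veq by linarith
      thus ?thesis using m1 by (simp add: pos_le_divide_eq mult.commute)
    qed
    define qr1 where "qr1 = qd1 t - \<Lambda> *v (q t - qd t)"
    define qr2 where "qr2 = qd2 t - \<Lambda> *v (q1 t - qd1 t)"
    have st: "s t = q1 t - qr1" by (simp add: sdef qr1_def)
    have ut: "u t = M (q t) *v qr2 + C (q t) (q1 t) *v qr1 + g (q t) - K *v s t - \<Phi> t *v ah t"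
      using ctrl[OF t0] by (simp add: st qr1_def qr2_def \<Phi>_def)
    have Mq2: "M (q t) *v q2 t = u t + f (q t) (q1 t) (w t) - C (q t) (q1 t) *v q1 t - g (q t)"
    proof -
      have "M (q t) *v q2 t = (M (q t) *v q2 t + C (q t) (q1 t) *v q1 t + g (q t)) - C (q t) (q1 t) *v q1 t - g (q t)"
        by simp
      thus ?thesis using dyn[OF t0] by simp
    qed
    have ah_eq: "ah t = ta t + a t" by (simp add: ta_def)
    have Cs: "C (q t) (q1 t) *v s t = C (q t) (q1 t) *v q1 t - C (q t) (q1 t) *v qr1"
      by (simp add: st bounded_bilinear.diff_right[OF bounded_bilinear_mv])
    have Pah: "\<Phi> t *v ah t = \<Phi> t *v ta t + \<Phi> t *v a t"
      by (simp add: ah_eq bounded_bilinear.add_right[OF bounded_bilinear_mv])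
    have Msd: "M (q t) *v sd t = M (q t) *v q2 t - M (q t) *v qr2"
      by (simp add: sd_def qr2_def bounded_bilinear.diff_right[OF bounded_bilinear_mv])
    have hM: "M (q t) *v sd t = - (C (q t) (q1 t) *v s t) - K *v s t - \<Phi> t *v ta t + dd t"
      unfolding Msd Mq2 ut Cs dd_def Pah by (simp add: algebra_simps)
    have hskew: "transpose (DM (q t) (q1 t) - 2 *\<^sub>R C (q t) (q1 t)) = - (DM (q t) (q1 t) - 2 *\<^sub>R C (q t) (q1 t))"
      using skew unfolding skew_symmetric_def by blast
    have adapt': "ah1 t = - lam *\<^sub>R ah t - P t *v (transpose (\<Phi> t) *v (Ri *v (\<Phi> t *v ah t - (f (q t) (q1 t) (w t) + eps t))))
        + P t *v (transpose (\<Phi> t) *v s t)"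
      using adapt[OF t0] by (simp add: sdef \<Phi>_def Ri_def)
    have e3: "\<Phi> t *v ah t - (f (q t) (q1 t) (w t) + eps t) = \<Phi> t *v ta t - dd t - eps t"
      unfolding Pah dd_def by (simp add: algebra_simps)
    have hatd: "tad t = - lam *\<^sub>R (ta t + a t) - P t *v (transpose (\<Phi> t) *v (Ri *v (\<Phi> t *v ta t - dd t - eps t)))
                 + P t *v (transpose (\<Phi> t) *v s t) - a1 t"
      unfolding tad_def adapt' e3 ah_eq[symmetric] ..
    have hP1: "P1 t = (- 2 * lam) *\<^sub>R P t + Q - P t ** transpose (\<Phi> t) ** Ri ** \<Phi> t ** P t"
      using ric[OF t0] by (simp add: \<Phi>_def Ri_def)
    have m2: "m2 > 0" using m1 m12 by simp
    have lam0: "lam \<ge> 0" using lam by simp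
    note key = lyap_alg[OF hM hskew Msym Psym[OF t0] hPz hatd hP1 RiS RiP hK kk hQ qm hMs0 Mup m2 hPs0 Pup[OF tT] pU lam0]
    show "V' t \<le> - min (kk / m2) (qm / (2 * (1 + norm Q / (2 * lam)))) * V t
              + (norm (matrix_inv R) + 1 / kk + 2 / qm) * (\<beta> t)\<^sup>2"
      using key unfolding V'_def Veq \<beta>def pU_def Ri_def dd_def \<Phi>_def by simp
  qed
  thus ?thesis using T10 by blast
qed

lemma sqrt_exp_half: "sqrt (exp x) = exp (x / 2)"
proof -
  have "exp x = (exp (x / 2))\<^sup>2" by (simp add: power2_eq_square exp_add[symmetric])
  thus ?thesis by simp
qed

lemma scalar_final:
  fixes V V' y y' S :: "real \<Rightarrow> real"
  assumes g: "\<gamma> > 0" and l: "ll > 0" and m1: "m1 > 0" and G: "G \<ge> 0" and b: "b \<ge> 0"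
    and dV: "\<And>t. t \<ge> T1 \<Longrightarrow> (V has_real_derivative V' t) (at t within {T1..})"
    and V'le: "\<And>t. t \<ge> T1 \<Longrightarrow> V' t \<le> - \<gamma> * V t + G * b\<^sup>2"
    and dy: "\<And>t. t \<ge> T1 \<Longrightarrow> (y has_real_derivative y' t) (at t within {T1..})"
    and y'le: "\<And>t. t \<ge> T1 \<Longrightarrow> y' t \<le> - ll * y t + S t / ll"
    and Sle: "\<And>t. t \<ge> T1 \<Longrightarrow> S t \<le> V t / m1"
    and y0: "\<And>t. y t \<ge> 0"
  shows "\<exists>c\<ge>0. \<forall>t\<ge>T1. sqrt (y t) \<le> c * exp (- (min ll \<gamma> / 4) * (t - T1)) + b * sqrt (G / (\<gamma> * m1)) / ll"
proof -
  define VB where "VB = (\<lambda>t. exp (- \<gamma> * (t - T1)) * V T1 + G * b\<^sup>2 / \<gamma>)"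
  have dVB: "(VB has_real_derivative (- \<gamma>) * exp (- \<gamma> * (t - T1)) * V T1) (at t within {T1..})" for t
    unfolding VB_def by (auto intro!: derivative_eq_intros)
  have Gb: "G * b\<^sup>2 \<ge> 0" using G by simp
  have initV: "V T1 \<le> VB T1" unfolding VB_def using Gb g by simp
  have Vb: "V t \<le> VB t" if "t \<ge> T1" for t
  proof (rule cmp_lin[where L = 0, OF dV dVB _ initV that])
    fix s assume s: "T1 \<le> s" "V s > VB s"
    have "- \<gamma> * V s < - \<gamma> * VB s" using s g by simp
    moreover have "- \<gamma> * VB s = (- \<gamma>) * exp (- \<gamma> * (s - T1)) * V T1 - G * b\<^sup>2"
      unfolding VB_def using g by (simp add: distrib_left)
    ultimately show "V' s - (- \<gamma>) * exp (- \<gamma> * (s - T1)) * V T1 \<le> 0 * (V s - VB s)"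
      using V'le[OF s(1)] by simp
  qed
  define A where "A = max 0 (V T1) / m1"
  have A0: "A \<ge> 0" using m1 by (simp add: A_def)
  have Sb: "S t \<le> A * exp (- \<gamma> * (t - T1)) + G * b\<^sup>2 / (\<gamma> * m1)" if "t \<ge> T1" for t
  proof -
    have "S t \<le> V t / m1" by (rule Sle[OF that])
    also have "\<dots> \<le> VB t / m1" using Vb[OF that] m1 by (simp add: divide_right_mono)
    also have "\<dots> = (exp (- \<gamma> * (t - T1)) * V T1) / m1 + G * b\<^sup>2 / (\<gamma> * m1)"
      unfolding VB_def by (simp add: add_divide_distrib)
    also have "(exp (- \<gamma> * (t - T1)) * V T1) / m1 \<le> A * exp (- \<gamma> * (t - T1))"
      unfolding A_def using m1 by (simp add: divide_right_mono mult_left_mono)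
    finally show ?thesis by simp
  qed
  define \<mu> where "\<mu> = min ll \<gamma> / 2"
  have mu: "\<mu> > 0" "\<mu> \<le> \<gamma>" "ll - \<mu> \<ge> ll / 2" using g l by (auto simp: \<mu>_def min_def)
  define c where "c = y T1 + A / (ll * (ll - \<mu>))"
  have lm: "ll - \<mu> > 0" using mu l by linarith
  have c0: "c \<ge> 0" unfolding c_def using y0[of T1] A0 l lm by simp
  have key: "(ll - \<mu>) * c \<ge> A / ll"
  proof -
    have "(ll - \<mu>) * c = (ll - \<mu>) * y T1 + A / ll" unfolding c_def using lm l by (simp add: field_simps)
    moreover have "(ll - \<mu>) * y T1 \<ge> 0" using lm y0[of T1] by simp
    ultimately show ?thesis by linarith
  qed
  define D where "D = G * b\<^sup>2 / (\<gamma> * m1 * ll\<^sup>2)"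
  define YB where "YB = (\<lambda>t. c * exp (- \<mu> * (t - T1)) + D)"
  have dYB: "(YB has_real_derivative (- \<mu>) * c * exp (- \<mu> * (t - T1))) (at t within {T1..})" for t
    unfolding YB_def by (auto intro!: derivative_eq_intros)
  have D0: "D \<ge> 0" unfolding D_def using Gb g m1 l by simp
  have initY: "y T1 \<le> YB T1" unfolding YB_def c_def using D0 A0 l lm by simp
  have Yb: "y t \<le> YB t" if "t \<ge> T1" for t
  proof (rule cmp_lin[where L = 0, OF dy dYB _ initY that])
    fix s assume s: "T1 \<le> s" "y s > YB s"
    define E where "E = exp (- \<mu> * (s - T1))"
    define F where "F = exp (- \<gamma> * (s - T1))"
    have EF: "F \<le> E" unfolding E_def F_def using mu s(1) by (intro exp_mono) (simp add: mult_right_mono)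
    have E0: "E > 0" by (simp add: E_def)
    have y1: "y' s \<le> - ll * y s + (A * F + G * b\<^sup>2 / (\<gamma> * m1)) / ll"
      using y'le[OF s(1)] Sb[OF s(1)] l unfolding F_def by (smt (verit) divide_right_mono)
    have y2: "- ll * y s < - ll * (c * E + D)" using s(2) l unfolding YB_def E_def by simp
    have y3: "ll * D = G * b\<^sup>2 / (\<gamma> * m1) / ll" unfolding D_def using l by (simp add: power2_eq_square field_simps)
    have y4: "(A * F + G * b\<^sup>2 / (\<gamma> * m1)) / ll = A / ll * F + G * b\<^sup>2 / (\<gamma> * m1) / ll"
      by (simp add: add_divide_distrib)
    have y5: "A / ll * F \<le> (ll - \<mu>) * c * E"
    proof -
      have "A / ll * F \<le> A / ll * E" using EF A0 l by (intro mult_left_mono) auto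
      also have "\<dots> \<le> (ll - \<mu>) * c * E" using key E0 by (intro mult_right_mono) auto
      finally show ?thesis .
    qed
    show "y' s - (- \<mu>) * c * exp (- \<mu> * (s - T1)) \<le> 0 * (y s - YB s)"
      using y1 y2 y3 y4 y5 unfolding E_def[symmetric] by (simp add: algebra_simps)
  qed
  show ?thesis
  proof (intro exI[of _ "sqrt c"] conjI allI impI)
    show "sqrt c \<ge> 0" using c0 by simp
    fix t assume t: "t \<ge> T1"
    have "sqrt (y t) \<le> sqrt (c * exp (- \<mu> * (t - T1)) + D)" using Yb[OF t] by (simp add: YB_def)
    also have "\<dots> \<le> sqrt (c * exp (- \<mu> * (t - T1))) + sqrt D"
      using c0 D0 by (intro sqrt_add_le_add_sqrt) auto
    also have "sqrt (c * exp (- \<mu> * (t - T1))) = sqrt c * exp (- (min ll \<gamma> / 4) * (t - T1))"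
      by (simp add: real_sqrt_mult sqrt_exp_half \<mu>_def)
    also have "sqrt D = b * sqrt (G / (\<gamma> * m1)) / ll"
    proof -
      have "D = (b / ll)\<^sup>2 * (G / (\<gamma> * m1))" unfolding D_def by (simp add: power2_eq_square field_simps)
      hence "sqrt D = sqrt ((b / ll)\<^sup>2) * sqrt (G / (\<gamma> * m1))" by (simp only: real_sqrt_mult)
      also have "sqrt ((b / ll)\<^sup>2) = b / ll" using b l by simp
      finally show ?thesis by simp
    qed
    finally show "sqrt (y t) \<le> sqrt c * exp (- (min ll \<gamma> / 4) * (t - T1)) + b * sqrt (G / (\<gamma> * m1)) / ll" .
  qed
qed

lemma exp_decay_lim:
  fixes \<alpha> :: real assumes "\<alpha> > 0"
  shows "((\<lambda>t. c0 * exp (- \<alpha> * t) + r) \<longlongrightarrow> r) at_top"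
proof -
  have "LIM t at_top. \<alpha> * t :> at_top"
    by (rule filterlim_tendsto_pos_mult_at_top[OF tendsto_const assms filterlim_ident])
  hence "LIM t at_top. - (\<alpha> * t) :> at_bot" by (simp add: filterlim_uminus_at_bot)
  hence "((\<lambda>t. exp (- (\<alpha> * t))) \<longlongrightarrow> 0) at_top"
    by (rule filterlim_compose[OF exp_at_bot])
  hence "((\<lambda>t. c0 * exp (- (\<alpha> * t)) + r) \<longlongrightarrow> c0 * 0 + r) at_top"
    by (intro tendsto_intros)
  thus ?thesis by simp
qed

theorem theorem1:
  fixes M :: "real^'n \<Rightarrow> real^'n^'n"
    and DM :: "real^'n \<Rightarrow> real^'n \<Rightarrow> real^'n^'n"
    and C :: "real^'n \<Rightarrow> real^'n \<Rightarrow> real^'n^'n"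
    and \<phi> :: "real^'n \<Rightarrow> real^'n \<Rightarrow> real^'h^'n"
    and K \<Lambda> R :: "real^'n^'n"
    and Q :: "real^'h^'h"
    and lam :: real
  assumes M_pd: "\<And>x. pos_def (M x)"
    and M_unif: "\<exists>m1 m2. 0 < m1 \<and> m1 \<le> m2 \<and>
                   (\<forall>x v. m1 * (norm v)\<^sup>2 \<le> v \<bullet> (M x *v v) \<and> v \<bullet> (M x *v v) \<le> m2 * (norm v)\<^sup>2)"
    and M_deriv: "\<And>x. (M has_derivative DM x) (at x)"
    and skew: "\<And>x v. skew_symmetric (DM x v - 2 *\<^sub>R C x v)"
    and \<phi>_bounded: "\<exists>B. \<forall>x xd z. norm (\<phi> x xd *v z) \<le> B * norm z"
    and K_pd: "pos_def K" and \<Lambda>_pd: "pos_def \<Lambda>"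
    and Q_pd: "pos_def Q" and R_pd: "pos_def R"
    and lam_pos: "lam > 0"
  shows "\<exists>\<alpha>>0. \<exists>C1 C2 C3. C1 \<ge> 0 \<and> C2 \<ge> 0 \<and> C3 \<ge> 0 \<and>
    (\<forall>(g :: real^'n \<Rightarrow> real^'n) (f :: real^'n \<Rightarrow> real^'n \<Rightarrow> 'w \<Rightarrow> real^'n) (w :: real \<Rightarrow> 'w)
      (q :: real \<Rightarrow> real^'n) q1 q2 (qd :: real \<Rightarrow> real^'n) qd1 qd2
      (u :: real \<Rightarrow> real^'n) (ah :: real \<Rightarrow> real^'h) ah1 (P :: real \<Rightarrow> real^'h^'h) P1
      (a :: real \<Rightarrow> real^'h) a1 (eps :: real \<Rightarrow> real^'n).
      (\<forall>t\<ge>0. (q has_vector_derivative q1 t) (at t within {0..}) \<and>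
              (q1 has_vector_derivative q2 t) (at t within {0..}) \<and>
              (qd has_vector_derivative qd1 t) (at t within {0..}) \<and>
              (qd1 has_vector_derivative qd2 t) (at t within {0..}) \<and>
              (ah has_vector_derivative ah1 t) (at t within {0..}) \<and>
              (P has_vector_derivative P1 t) (at t within {0..}) \<and>
              (a has_vector_derivative a1 t) (at t within {0..})) \<longrightarrow>
      bounded (qd1 ` {0..}) \<longrightarrow> bounded (qd2 ` {0..}) \<longrightarrow>
      bounded (eps ` {0..}) \<longrightarrow>
      pos_def (P 0) \<longrightarrow>
      (\<forall>t\<ge>0. M (q t) *v q2 t + C (q t) (q1 t) *v q1 t + g (q t) = u t + f (q t) (q1 t) (w t)) \<longrightarrow>
      (\<forall>t\<ge>0.
         let qr1 = qd1 t - \<Lambda> *v (q t - qd t);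
             qr2 = qd2 t - \<Lambda> *v (q1 t - qd1 t);
             s = q1 t - qr1;
             \<Phi> = \<phi> (q t) (q1 t);
             y = f (q t) (q1 t) (w t) + eps t
         in u t = M (q t) *v qr2 + C (q t) (q1 t) *v qr1 + g (q t) - K *v s - \<Phi> *v ah t
          \<and> ah1 t = - lam *\<^sub>R ah t - P t *v (transpose \<Phi> *v (matrix_inv R *v (\<Phi> *v ah t - y)))
                     + P t *v (transpose \<Phi> *v s)
          \<and> P1 t = (- 2 * lam) *\<^sub>R P t + Q - P t ** transpose \<Phi> ** matrix_inv R ** \<Phi> ** P t) \<longrightarrow>
      (let d = (\<lambda>t. f (q t) (q1 t) (w t) - \<phi> (q t) (q1 t) *v a t);
           \<rho> = (SUP t\<in>{0..}. ereal (C1 * norm (d t) + C2 * norm (eps t)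
                                     + C3 * (lam * norm (a t) + norm (a1 t))))
       in (\<exists>c0. \<forall>t\<ge>0. ereal (norm (q t - qd t)) \<le> ereal (c0 * exp (- \<alpha> * t)) + \<rho>)
          \<and> Limsup at_top (\<lambda>t. ereal (norm (q t - qd t))) \<le> \<rho>))"
proof -
  obtain m1 m2 where m: "0 < m1" "m1 \<le> m2"
    and Mb: "\<And>x v. m1 * (norm v)\<^sup>2 \<le> v \<bullet> (M x *v v)" "\<And>x v. v \<bullet> (M x *v v) \<le> m2 * (norm v)\<^sup>2"
    using M_unif by blast
  obtain B0 where B0: "\<And>x xd z. norm (\<phi> x xd *v z) \<le> B0 * norm z" using \<phi>_bounded by blast
  obtain kk where kk: "kk > 0" "\<And>x. kk * (norm x)\<^sup>2 \<le> x \<bullet> (K *v x)" using pd_lower[OF K_pd] by blast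
  obtain ll where ll: "ll > 0" "\<And>x. ll * (norm x)\<^sup>2 \<le> x \<bullet> (\<Lambda> *v x)" using pd_lower[OF \<Lambda>_pd] by blast
  obtain qm where qm: "qm > 0" "\<And>x. qm * (norm x)\<^sup>2 \<le> x \<bullet> (Q *v x)" using pd_lower[OF Q_pd] by blast
  have Msym: "\<And>x. transpose (M x) = M x" using M_pd by (simp add: pos_def_def)
  have m2: "m2 > 0" using m by simp
  define pU where "pU = 1 + norm Q / (2 * lam)"
  have pU: "pU > 0" unfolding pU_def using lam_pos by (simp add: add_pos_nonneg)
  define \<gamma> where "\<gamma> = min (kk / m2) (qm / (2 * pU))"
  have \<gamma>: "\<gamma> > 0" unfolding \<gamma>_def using kk m2 qm pU by simp
  define G where "G = norm (matrix_inv R) + 1 / kk + 2 / qm"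
  have G: "G > 0" unfolding G_def using kk qm by (simp add: add_nonneg_pos)
  define \<kappa> where "\<kappa> = sqrt (G / (\<gamma> * m1)) / ll"
  have \<kappa>: "\<kappa> > 0" unfolding \<kappa>_def using G \<gamma> m ll by simp
  define \<alpha> where "\<alpha> = min ll \<gamma> / 4"
  have \<alpha>: "\<alpha> > 0" unfolding \<alpha>_def using ll \<gamma> by simp
  have k0: "0 \<le> \<kappa>" using \<kappa> by simp
  show ?thesis
  proof (rule exI[of _ \<alpha>], rule conjI[OF \<alpha>], rule exI[of _ \<kappa>], rule exI[of _ \<kappa>], rule exI[of _ \<kappa>],
      intro conjI k0 allI impI)
    fix g :: "real^'n \<Rightarrow> real^'n" and f :: "real^'n \<Rightarrow> real^'n \<Rightarrow> 'w \<Rightarrow> real^'n" and w :: "real \<Rightarrow> 'w"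
      and q q1 q2 qd qd1 qd2 u :: "real \<Rightarrow> real^'n" and ah ah1 :: "real \<Rightarrow> real^'h"
      and P P1 :: "real \<Rightarrow> real^'h^'h" and a a1 :: "real \<Rightarrow> real^'h" and eps :: "real \<Rightarrow> real^'n"
    assume der: "\<forall>t\<ge>0. (q has_vector_derivative q1 t) (at t within {0..}) \<and>
              (q1 has_vector_derivative q2 t) (at t within {0..}) \<and>
              (qd has_vector_derivative qd1 t) (at t within {0..}) \<and>
              (qd1 has_vector_derivative qd2 t) (at t within {0..}) \<and>
              (ah has_vector_derivative ah1 t) (at t within {0..}) \<and>
              (P has_vector_derivative P1 t) (at t within {0..}) \<and>
              (a has_vector_derivative a1 t) (at t within {0..})"
      and bd1: "bounded (qd1 ` {0..})" and bd2: "bounded (qd2 ` {0..})" and bde: "bounded (eps ` {0..})"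
      and P0: "pos_def (P 0)"
      and dyn: "\<forall>t\<ge>0. M (q t) *v q2 t + C (q t) (q1 t) *v q1 t + g (q t) = u t + f (q t) (q1 t) (w t)"
      and lets: "\<forall>t\<ge>0.
         let qr1 = qd1 t - \<Lambda> *v (q t - qd t);
             qr2 = qd2 t - \<Lambda> *v (q1 t - qd1 t);
             s = q1 t - qr1;
             \<Phi> = \<phi> (q t) (q1 t);
             y = f (q t) (q1 t) (w t) + eps t
         in u t = M (q t) *v qr2 + C (q t) (q1 t) *v qr1 + g (q t) - K *v s - \<Phi> *v ah t
          \<and> ah1 t = - lam *\<^sub>R ah t - P t *v (transpose \<Phi> *v (matrix_inv R *v (\<Phi> *v ah t - y)))
                     + P t *v (transpose \<Phi> *v s)
          \<and> P1 t = (- 2 * lam) *\<^sub>R P t + Q - P t ** transpose \<Phi> ** matrix_inv R ** \<Phi> ** P t"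
    have L: "u t = M (q t) *v (qd2 t - \<Lambda> *v (q1 t - qd1 t)) + C (q t) (q1 t) *v (qd1 t - \<Lambda> *v (q t - qd t))
                 + g (q t) - K *v (q1 t - (qd1 t - \<Lambda> *v (q t - qd t))) - \<phi> (q t) (q1 t) *v ah t
          \<and> ah1 t = - lam *\<^sub>R ah t - P t *v (transpose (\<phi> (q t) (q1 t)) *v (matrix_inv R *v
                  (\<phi> (q t) (q1 t) *v ah t - (f (q t) (q1 t) (w t) + eps t))))
                  + P t *v (transpose (\<phi> (q t) (q1 t)) *v (q1 t - (qd1 t - \<Lambda> *v (q t - qd t))))
          \<and> P1 t = (- 2 * lam) *\<^sub>R P t + Q
                  - P t ** transpose (\<phi> (q t) (q1 t)) ** matrix_inv R ** \<phi> (q t) (q1 t) ** P t" if "t \<ge> 0" for t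
      using lets that unfolding Let_def by blast
    define s where "s = (\<lambda>t. q1 t - (qd1 t - \<Lambda> *v (q t - qd t)))"
    define V where "V = (\<lambda>t. s t \<bullet> (M (q t) *v s t) + (ah t - a t) \<bullet> (matrix_inv (P t) *v (ah t - a t)))"
    define \<beta> where "\<beta> = (\<lambda>t. norm (f (q t) (q1 t) (w t) - \<phi> (q t) (q1 t) *v a t) + norm (eps t) + lam * norm (a t) + norm (a1 t))"
    obtain T1 V' where T1: "T1 \<ge> 0" and LV: "\<And>t. t \<ge> T1 \<Longrightarrow> (V has_real_derivative V' t) (at t within {T1..}) \<and>
      V' t \<le> - min (kk / m2) (qm / (2 * (1 + norm Q / (2 * lam)))) * V t
              + (norm (matrix_inv R) + 1 / kk + 2 / qm) * (\<beta> t)\<^sup>2 \<and>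
      (norm (s t))\<^sup>2 \<le> V t / m1"
    proof -
      have derT: "\<And>t. t \<ge> 0 \<Longrightarrow> (q has_vector_derivative q1 t) (at t within {0..}) \<and>
              (q1 has_vector_derivative q2 t) (at t within {0..}) \<and>
              (qd has_vector_derivative qd1 t) (at t within {0..}) \<and>
              (qd1 has_vector_derivative qd2 t) (at t within {0..}) \<and>
              (ah has_vector_derivative ah1 t) (at t within {0..}) \<and>
              (P has_vector_derivative P1 t) (at t within {0..}) \<and>
              (a has_vector_derivative a1 t) (at t within {0..})" using der by blast
      have dynT: "\<And>t. t \<ge> 0 \<Longrightarrow> M (q t) *v q2 t + C (q t) (q1 t) *v q1 t + g (q t) = u t + f (q t) (q1 t) (w t)"
        using dyn by blast
      note L1 = conjunct1[OF L] and L2 = conjunct1[OF conjunct2[OF L]] and L3 = conjunct2[OF conjunct2[OF L]]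
      show ?thesis
        using lyap[where M = M and DM = DM and C = C and \<phi> = \<phi> and K = K and \<Lambda> = \<Lambda> and R = R and Q = Q
          and lam = lam and g = g and f = f and w = w and q = q and ?q1.0 = q1 and ?q2.0 = q2 and qd = qd and ?qd1.0 = qd1
          and ?qd2.0 = qd2 and u = u and eps = eps and ah = ah and ?ah1.0 = ah1 and a = a and ?a1.0 = a1 and P = P and ?P1.0 = P1
          and s = s and V = V and \<beta> = \<beta> and ?m1.0 = m1 and ?m2.0 = m2 and ?B0.0 = B0 and kk = kk and qm = qm,
          OF Msym Mb(1) Mb(2) m(1) m(2) M_deriv skew B0 kk(2) kk(1) Q_pd qm(2) qm(1) R_pd lam_pos
          derT P0 dynT L1 L2 L3 s_def V_def \<beta>_def] that by blast
    qed
    have \<beta>0: "\<beta> t \<ge> 0" for t unfolding \<beta>_def using lam_pos by simp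
    define d where "d = (\<lambda>t. f (q t) (q1 t) (w t) - \<phi> (q t) (q1 t) *v a t)"
    define \<rho> where "\<rho> = (SUP t\<in>{0..}. ereal (\<kappa> * norm (d t) + \<kappa> * norm (eps t) + \<kappa> * (lam * norm (a t) + norm (a1 t))))"
    have kb: "\<kappa> * norm (d t) + \<kappa> * norm (eps t) + \<kappa> * (lam * norm (a t) + norm (a1 t)) = \<kappa> * \<beta> t" for t
      by (simp add: \<beta>_def d_def algebra_simps)
    have \<rho>ge: "ereal (\<kappa> * \<beta> t) \<le> \<rho>" if "t \<ge> 0" for t
      unfolding \<rho>_def kb using that by (intro SUP_upper) auto
    have goal_gen: "(\<exists>c0. \<forall>t\<ge>0. ereal (norm (q t - qd t)) \<le> ereal (c0 * exp (- \<alpha> * t)) + \<rho>)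
        \<and> Limsup at_top (\<lambda>t. ereal (norm (q t - qd t))) \<le> \<rho>"
    proof (cases \<rho>)
      case PInf thus ?thesis by simp
    next
      case MInf thus ?thesis using \<rho>ge[of 0] by simp
    next
      case (real r)
      have \<beta>b: "\<beta> t \<le> r / \<kappa>" if "t \<ge> 0" for t
        using \<rho>ge[OF that] real \<kappa> by (simp add: pos_le_divide_eq mult.commute)
      define b where "b = r / \<kappa>"
      have b0: "b \<ge> 0" using \<beta>b[of 0] \<beta>0[of 0] by (simp add: b_def)
      define e where "e = (\<lambda>t. q t - qd t)"
      define y where "y = (\<lambda>t. e t \<bullet> e t)"
      define y' where "y' = (\<lambda>t. 2 * (e t \<bullet> (s t - \<Lambda> *v e t)))"
      define S where "S = (\<lambda>t. (norm (s t))\<^sup>2)"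
      have de: "(e has_vector_derivative (s t - \<Lambda> *v e t)) (at t within {0..})" if "t \<ge> 0" for t
      proof -
        have "(e has_vector_derivative (q1 t - qd1 t)) (at t within {0..})"
          unfolding e_def using der that by (intro has_vector_derivative_diff) auto
        moreover have "s t - \<Lambda> *v e t = q1 t - qd1 t" by (simp add: s_def e_def)
        ultimately show ?thesis by simp
      qed
      have dy: "(y has_real_derivative y' t) (at t within {T1..})" if "t \<ge> T1" for t
      proof -
        have t0: "t \<ge> 0" using that T1 by simp
        have "(y has_real_derivative (e t \<bullet> (s t - \<Lambda> *v e t) + (s t - \<Lambda> *v e t) \<bullet> e t)) (at t within {0..})"
          unfolding y_def by (rule inner_vd[OF de[OF t0] de[OF t0]])
        hence "(y has_real_derivative y' t) (at t within {0..})"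
          by (rule DERIV_cong) (simp add: y'_def inner_commute)
        thus ?thesis by (rule DERIV_subset) (use T1 in auto)
      qed
      have y'le: "y' t \<le> - ll * y t + S t / ll" if "t \<ge> T1" for t
      proof -
        have "e t \<bullet> s t \<le> norm (e t) * norm (s t)" by (rule norm_cauchy_schwarz)
        moreover have "2 * (norm (e t) * norm (s t)) \<le> ll * (norm (e t))\<^sup>2 + (norm (s t))\<^sup>2 / ll"
          by (rule amgm[OF ll(1)])
        moreover have "ll * (norm (e t))\<^sup>2 \<le> e t \<bullet> (\<Lambda> *v e t)" by (rule ll(2))
        moreover have "- ll * y t = - (ll * (norm (e t))\<^sup>2)" by (simp add: y_def power2_norm_eq_inner)
        moreover have "y' t = 2 * (e t \<bullet> s t) - 2 * (e t \<bullet> (\<Lambda> *v e t))" by (simp add: y'_def inner_diff_right)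
        ultimately show ?thesis unfolding S_def by linarith
      qed
      have V'le: "V' t \<le> - \<gamma> * V t + G * b\<^sup>2" if "t \<ge> T1" for t
      proof -
        have "V' t \<le> - \<gamma> * V t + G * (\<beta> t)\<^sup>2" using LV[OF that] unfolding \<gamma>_def G_def pU_def by simp
        moreover have "(\<beta> t)\<^sup>2 \<le> b\<^sup>2" using \<beta>b[of t] \<beta>0[of t] that T1 unfolding b_def by (intro power_mono) auto
        hence "G * (\<beta> t)\<^sup>2 \<le> G * b\<^sup>2" using G by (intro mult_left_mono) auto
        ultimately show ?thesis by linarith
      qed
      obtain c where c: "c \<ge> 0" "\<forall>t\<ge>T1. sqrt (y t) \<le> c * exp (- (min ll \<gamma> / 4) * (t - T1)) + b * sqrt (G / (\<gamma> * m1)) / ll"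
        using scalar_final[OF \<gamma> ll(1) m(1) less_imp_le[OF G] b0, of T1 V V' y y' S]
          LV V'le dy y'le
        by (auto simp: S_def y_def)
      have br: "b * sqrt (G / (\<gamma> * m1)) / ll = r"
      proof -
        have "b * sqrt (G / (\<gamma> * m1)) / ll = b * \<kappa>" by (simp add: \<kappa>_def)
        also have "\<dots> = r" unfolding b_def using \<kappa> by simp
        finally show ?thesis .
      qed
      have r0: "r \<ge> 0" using b0 \<kappa> by (simp add: b_def zero_le_divide_iff)
      have contE: "continuous_on {0..T1} e"
        unfolding e_def using der by (intro continuous_on_diff vd_cont_on_sub) auto
      obtain E1 where E1: "\<forall>t\<in>{0..T1}. norm (e t) \<le> E1" using compact_bound[OF contE] by blast
      define c0 where "c0 = (max E1 0 + c) * exp (\<alpha> * T1)"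
      have bnd: "norm (e t) \<le> c0 * exp (- \<alpha> * t) + r" if "t \<ge> 0" for t
      proof (cases "t \<ge> T1")
        case True
        have "norm (e t) = sqrt (y t)" by (simp add: y_def norm_eq_sqrt_inner)
        also have "\<dots> \<le> c * exp (- \<alpha> * (t - T1)) + r" using c(2) True br by (simp add: \<alpha>_def)
        also have "c * exp (- \<alpha> * (t - T1)) = (c * exp (\<alpha> * T1)) * exp (- \<alpha> * t)"
          by (simp add: mult.assoc exp_add[symmetric] algebra_simps)
        also have "c * exp (\<alpha> * T1) \<le> c0" unfolding c0_def by (intro mult_right_mono) auto
        finally show ?thesis by (simp add: mult_right_mono)
      next
        case False
        have "t \<in> {0..T1}" using that False by simp
        hence "norm (e t) \<le> E1" using E1 by blast
        hence "norm (e t) \<le> max E1 0" by simp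
        also have "\<dots> \<le> max E1 0 * exp (\<alpha> * (T1 - t))"
          using False \<alpha> by (intro mult_le_cancel_left1[THEN iffD2, rule_format] ) auto
        also have "\<dots> = (max E1 0 * exp (\<alpha> * T1)) * exp (- \<alpha> * t)"
          by (simp add: mult.assoc exp_add[symmetric] algebra_simps)
        also have "\<dots> \<le> c0 * exp (- \<alpha> * t)" unfolding c0_def using c(1) by (intro mult_right_mono) auto
        finally show ?thesis using r0 by simp
      qed
      show ?thesis
      proof
        show "\<exists>c0. \<forall>t\<ge>0. ereal (norm (q t - qd t)) \<le> ereal (c0 * exp (- \<alpha> * t)) + \<rho>"
          using bnd real by (intro exI[of _ c0]) (simp add: e_def)
        have "Limsup at_top (\<lambda>t. ereal (norm (q t - qd t))) \<le> Limsup at_top (\<lambda>t. ereal (c0 * exp (- \<alpha> * t) + r))"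
        proof (rule Limsup_mono)
          show "\<forall>\<^sub>F t in at_top. ereal (norm (q t - qd t)) \<le> ereal (c0 * exp (- \<alpha> * t) + r)"
            using eventually_ge_at_top[of "0::real"]
          proof (rule eventually_mono)
            fix t :: real assume "0 \<le> t"
            thus "ereal (norm (q t - qd t)) \<le> ereal (c0 * exp (- \<alpha> * t) + r)" using bnd[of t] by (simp add: e_def)
          qed
        qed
        also have "\<dots> = ereal r"
        proof -
          have lim: "((\<lambda>t. ereal (c0 * exp (- \<alpha> * t) + r)) \<longlongrightarrow> ereal r) at_top"
            by (rule tendsto_ereal[OF exp_decay_lim[OF \<alpha>]])
          show ?thesis by (rule lim_imp_Limsup[OF _ lim]) simp
        qed
        finally show "Limsup at_top (\<lambda>t. ereal (norm (q t - qd t))) \<le> \<rho>" using real by simp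
      qed
    qed
    show "let d = (\<lambda>t. f (q t) (q1 t) (w t) - \<phi> (q t) (q1 t) *v a t);
           \<rho> = (SUP t\<in>{0..}. ereal (\<kappa> * norm (d t) + \<kappa> * norm (eps t)
                                     + \<kappa> * (lam * norm (a t) + norm (a1 t))))
       in (\<exists>c0. \<forall>t\<ge>0. ereal (norm (q t - qd t)) \<le> ereal (c0 * exp (- \<alpha> * t)) + \<rho>)
          \<and> Limsup at_top (\<lambda>t. ereal (norm (q t - qd t))) \<le> \<rho>"
      using goal_gen unfolding \<rho>_def d_def Let_def by simp
  qed
qed

end
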